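(* Let $d\ge 1$ be an integer, let $\sigma>0$, and let $R_N(u)=\frac{\sigma}{4}\int_{\mathbb{T}^d} :\! u_N^4\!:\,dx$ (the renormalized quartic potential energy described in the context). Then, for any $K>0$, \[ \sup_{N\in\mathbb{N}}\mathbb{E}_\mu\big[e^{R_N(u)}\big]\ \ge\ \sup_{N\in\mathbb{N}}\mathbb{E}_\mu\Big[\mathbf 1_{\{\int_{\mathbb{T}^d}:u_N^2:\,dx\le K\}}e^{R_N(u)}\Big]\ \ge\ \sup_{N\in\mathbb{N}}\mathbb{E}_\mu\Big[\mathbf 1_{\{|\int_{\mathbb{T}^d}:u_N^2:\,dx|\le K\}}e^{R_N(u)}\Big]=\infty . \] In particular, the focusing quartic Gibbs measure $Z^{-1}e^{R(u)}d\mu$, even with a Wick-ordered $L^2$-cutoff, cannot be defined as a probability measure.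
   Context: $\mathbb{T}^d=(\mathbb{R}/2\pi\mathbb{Z})^d$ is equipped with the normalized Lebesgue measure $dx=(2\pi)^{-d}dx_{\mathrm{Leb}}$; $e_n(x)=e^{in\cdot x}$, $\langle n\rangle=(1+|n|^2)^{1/2}$. The log-correlated Gaussian field $\mu$ is the law of the random distribution $u=\sum_{n\in\mathbb{Z}^d}\langle n\rangle^{-d/2}g_n e_n$, where $\{g_n\}_{n\in\mathbb{Z}^d}$ are independent standard complex Gaussian random variables conditioned on $g_{-n}=\overline{g_n}$ (so $g_0$ is a standard real Gaussian); formally $d\mu=Z^{-1}e^{-\frac12\|u\|_{H^{d/2}}^2}du$. For $N\in\mathbb{N}$, $\pi_N f=\sum_{|n|\le N}\widehat f(n)e_n$ and $u_N=\pi_N u$. Set $\sigma_N=\mathbb{E}[u_N(x)^2]=\sum_{|n|\le N}\langle n\rangle^{-d}$ (independent of $x$). Wick powers are $:\!u_N^k\!:\,=H_k(u_N;\sigma_N)$, where $H_k(x;s)$ are the Hermite polynomials with variance parameter $s$, defined by $e^{tx-\frac12 s t^2}=\sum_{k\ge0}\frac{t^k}{k!}H_k(x;s)$; in particular $:\!u_N^2\!:\,=u_N^2-\sigma_N$ and $:\!u_N^4\!:\,=u_N^4-6\sigma_N u_N^2+3\sigma_N^2$. *)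

theory Defs
  imports "HOL-Probability.Probability"
begin

text \<open>Frequencies n in Z^d are vectors int^'d; the dimension d = CARD('d) >= 1.\<close>

definition freq_norm :: "int ^ ('d::finite) \<Rightarrow> real" where
  "freq_norm n = norm (\<chi> i. real_of_int (n $ i))"

definition japanese :: "int ^ ('d::finite) \<Rightarrow> real" where
  "japanese n = sqrt (1 + (freq_norm n)\<^sup>2)"

definition pair_freq :: "int ^ 'd \<Rightarrow> real ^ 'd \<Rightarrow> real" where
  "pair_freq n x = (\<Sum>i\<in>UNIV. real_of_int (n $ i) * x $ i)"

definition e_n :: "int ^ 'd \<Rightarrow> real ^ 'd \<Rightarrow> complex" where
  "e_n n x = cis (pair_freq n x)"

definition gauss_space :: "(int ^ 'd \<Rightarrow> real) measure" where
  "gauss_space = PiM UNIV (\<lambda>_. density lborel std_normal_density)"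

text \<open>g_n = ((1+i) xi_n + (1-i) xi_{-n}) / 2: independent standard complex Gaussians
  conditioned on g_{-n} = conj g_n, with g_0 = xi_0 standard real.\<close>
definition gcoef :: "(int ^ 'd \<Rightarrow> real) \<Rightarrow> int ^ 'd \<Rightarrow> complex" where
  "gcoef \<xi> n = ((1 + \<i>) * complex_of_real (\<xi> n) + (1 - \<i>) * complex_of_real (\<xi> (- n))) / 2"

definition freq_ball :: "nat \<Rightarrow> (int ^ 'd) set" where
  "freq_ball N = {n. freq_norm n \<le> real N}"

text \<open>u_N = pi_N u = sum_{|n|<=N} <n>^{-d/2} g_n e_n (real-valued; we take Re).\<close>
definition uN :: "nat \<Rightarrow> (int ^ 'd \<Rightarrow> real) \<Rightarrow> real ^ 'd \<Rightarrow> real" where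
  "uN N \<xi> x = Re (\<Sum>n\<in>freq_ball N.
      complex_of_real (japanese n powr (- real CARD('d) / 2)) * gcoef \<xi> n * e_n n x)"

definition sigmaN :: "'d::finite itself \<Rightarrow> nat \<Rightarrow> real" where
  "sigmaN _ N = (\<Sum>n\<in>(freq_ball N :: (int ^ 'd) set). japanese n powr (- real CARD('d)))"

definition wick2 :: "'d::finite itself \<Rightarrow> nat \<Rightarrow> (int ^ 'd \<Rightarrow> real) \<Rightarrow> real ^ 'd \<Rightarrow> real" where
  "wick2 T N \<xi> x = (uN N \<xi> x)\<^sup>2 - sigmaN T N"

definition wick4 :: "'d::finite itself \<Rightarrow> nat \<Rightarrow> (int ^ 'd \<Rightarrow> real) \<Rightarrow> real ^ 'd \<Rightarrow> real" where
  "wick4 T N \<xi> x = (uN N \<xi> x) ^ 4 - 6 * sigmaN T N * (uN N \<xi> x)\<^sup>2 + 3 * (sigmaN T N)\<^sup>2"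

definition torus_integral :: "(real ^ 'd \<Rightarrow> real) \<Rightarrow> real" where
  "torus_integral f = (LINT x : cbox 0 (\<chi> i. 2 * pi) | lborel. f x) / (2 * pi) ^ CARD('d)"

definition RN :: "real \<Rightarrow> 'd itself \<Rightarrow> nat \<Rightarrow> (int ^ 'd \<Rightarrow> real) \<Rightarrow> real" where
  "RN \<sigma> T N \<xi> = \<sigma> / 4 * torus_integral (wick4 T N \<xi>)"

end

theory Submission
  imports Defs
begin

lemma freq_norm_nonneg: "freq_norm n \<ge> 0"
  by (simp add: freq_norm_def)

lemma freq_norm_uminus: "freq_norm (- n) = freq_norm n"
proof -
  have "(\<chi> i. real_of_int ((- n) $ i)) = - (\<chi> i. real_of_int (n $ i))"
    by (simp add: vec_eq_iff)
  then show ?thesis unfolding freq_norm_def by (simp only: norm_minus_cancel)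
qed

lemma comp_le_freq_norm: "\<bar>real_of_int (n $ i)\<bar> \<le> freq_norm n"
  unfolding freq_norm_def using component_le_norm_cart[of "\<chi> i. real_of_int (n $ i)" i] by simp

lemma freq_norm_le_l1: "freq_norm n \<le> (\<Sum>i\<in>UNIV. \<bar>real_of_int (n $ i)\<bar>)"
  unfolding freq_norm_def using norm_le_l1_cart[of "\<chi> i. real_of_int (n $ i)"] by simp

lemma japanese_ge1: "japanese n \<ge> 1"
  unfolding japanese_def by simp

lemma japanese_pos: "japanese n > 0"
  using japanese_ge1[of n] by linarith

lemma japanese_uminus: "japanese (- n) = japanese n"
  unfolding japanese_def by (simp add: freq_norm_uminus)

lemma japanese_le: "japanese n \<le> 1 + freq_norm n"
proof -
  have "1 + (freq_norm n)\<^sup>2 \<le> (1 + freq_norm n)\<^sup>2"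
    using freq_norm_nonneg[of n] by (simp add: power2_eq_square algebra_simps)
  then show ?thesis unfolding japanese_def
    using freq_norm_nonneg[of n] real_sqrt_le_mono by fastforce
qed

lemma pair_freq_add: "pair_freq (n + m) x = pair_freq n x + pair_freq m x"
  unfolding pair_freq_def by (simp add: algebra_simps sum.distrib)

lemma pair_freq_uminus: "pair_freq (- n) x = - pair_freq n x"
  unfolding pair_freq_def by (simp add: sum_negf)

lemma pair_freq_diff: "pair_freq (n - m) x = pair_freq n x - pair_freq m x"
  unfolding pair_freq_def by (simp add: algebra_simps sum_subtractf)

lemma pair_freq_zero[simp]: "pair_freq 0 x = 0"
  unfolding pair_freq_def by simp

definition cube :: "nat \<Rightarrow> (int ^ 'd::finite) set" where
  "cube m = {n. \<forall>i. \<bar>n $ i\<bar> \<le> int m}"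

lemma abs_le_iff': "(\<bar>x::int\<bar> \<le> c) = (- c \<le> x \<and> x \<le> c)" by arith

lemma cube_iff: "n \<in> cube m \<longleftrightarrow> (\<forall>i. - int m \<le> n $ i \<and> n $ i \<le> int m)"
  unfolding cube_def by (simp add: abs_le_iff')

lemma cube_eq_image: "cube m = vec_lambda ` (PiE UNIV (\<lambda>_. {- int m..int m}))"
proof (rule set_eqI)
  fix n :: "int ^ 'd"
  show "n \<in> cube m \<longleftrightarrow> n \<in> vec_lambda ` (PiE UNIV (\<lambda>_. {- int m..int m}))"
  proof
    assume "n \<in> cube m"
    then have "vec_nth n \<in> PiE UNIV (\<lambda>_. {- int m..int m})"
      unfolding cube_iff PiE_iff by simp
    moreover have "n = vec_lambda (vec_nth n)" by simp
    ultimately show "n \<in> vec_lambda ` (PiE UNIV (\<lambda>_. {- int m..int m}))" by blast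
  next
    assume "n \<in> vec_lambda ` (PiE UNIV (\<lambda>_. {- int m..int m}))"
    then show "n \<in> cube m" unfolding cube_iff PiE_iff by auto
  qed
qed

lemma card_cube: "card (cube m :: (int ^ 'd::finite) set) = (2 * m + 1) ^ CARD('d)"
proof -
  have "inj_on (vec_lambda :: ('d \<Rightarrow> int) \<Rightarrow> int ^ 'd) (PiE UNIV (\<lambda>_. {- int m..int m}))"
    by (auto simp: inj_on_def vec_lambda_inject)
  then have "card (cube m :: (int ^ 'd) set) = card (PiE (UNIV :: 'd set) (\<lambda>_. {- int m..int m}))"
    unfolding cube_eq_image by (rule card_image)
  also have "\<dots> = (2 * m + 1) ^ CARD('d)"
    by (simp add: card_PiE nat_add_distrib nat_mult_distrib)
  finally show ?thesis .
qed

lemma finite_cube: "finite (cube m :: (int ^ 'd::finite) set)"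
  unfolding cube_eq_image by (intro finite_imageI finite_PiE) auto

lemma freq_ball_sub_cube: "freq_ball N \<subseteq> cube N"
proof
  fix n :: "int ^ 'd" assume "n \<in> freq_ball N"
  then have "freq_norm n \<le> real N" by (simp add: freq_ball_def)
  then have h: "\<bar>real_of_int (n $ i)\<bar> \<le> real N" for i using comp_le_freq_norm[of n i] by linarith
  have "\<bar>n $ i\<bar> \<le> int N" for i using h[of i] by linarith
  then show "n \<in> cube N" unfolding cube_def by simp
qed

lemma finite_freq_ball: "finite (freq_ball N :: (int ^ 'd::finite) set)"
  using finite_subset[OF freq_ball_sub_cube finite_cube] .

lemma cube_sub_freq_ball:
  assumes "CARD('d) * m \<le> N"
  shows "(cube m :: (int ^ 'd::finite) set) \<subseteq> freq_ball N"
proof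
  fix n :: "int ^ 'd" assume "n \<in> cube m"
  then have h: "\<bar>n $ i\<bar> \<le> int m" for i unfolding cube_def by simp
  have "\<bar>real_of_int (n $ i)\<bar> \<le> real m" for i using h[of i] by linarith
  then have "(\<Sum>i\<in>UNIV. \<bar>real_of_int (n $ i)\<bar>) \<le> (\<Sum>i\<in>(UNIV::'d set). real m)"
    by (intro sum_mono) auto
  also have "\<dots> = real (CARD('d) * m)" by simp
  also have "\<dots> \<le> real N" using assms by linarith
  finally show "n \<in> freq_ball N" unfolding freq_ball_def using freq_norm_le_l1[of n] by simp
qed

lemma uminus_freq_ball: "n \<in> freq_ball N \<Longrightarrow> - n \<in> freq_ball N"
  by (simp add: freq_ball_def freq_norm_uminus)


lemma cis_deriv:
  fixes m :: real assumes "m \<noteq> 0"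
  shows "((\<lambda>t. complex_of_real (sin (m * t) / m) + \<i> * complex_of_real (- cos (m * t) / m))
     has_vector_derivative cis (m * t)) (at t within S)"
proof -
  have 1: "((\<lambda>t. sin (m * t) / m) has_real_derivative cos (m * t)) (at t within S)"
    using assms by (auto intro!: derivative_eq_intros)
  have 2: "((\<lambda>t. - cos (m * t) / m) has_real_derivative sin (m * t)) (at t within S)"
    using assms by (auto intro!: derivative_eq_intros)
  have "((\<lambda>t. complex_of_real (sin (m * t) / m) + \<i> * complex_of_real (- cos (m * t) / m))
     has_vector_derivative (complex_of_real (cos (m * t)) + \<i> * complex_of_real (sin (m * t)))) (at t within S)"
    by (intro has_vector_derivative_add has_vector_derivative_mult_right
        has_vector_derivative_of_real 1 2)
  moreover have "complex_of_real (cos (m * t)) + \<i> * complex_of_real (sin (m * t)) = cis (m * t)"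
    by (simp add: complex_eq_iff)
  ultimately show ?thesis by simp
qed

lemma integral_cis_1d:
  fixes k :: int
  shows "integral\<^sup>L lborel (\<lambda>t. indicator {0..2*pi} t *\<^sub>R cis (real_of_int k * t)) = (if k = 0 then complex_of_real (2*pi) else 0)"
proof -
  have "integral\<^sup>L lborel (\<lambda>t. indicator {0..2*pi} t *\<^sub>R cis (real_of_int k * t))
     = set_lebesgue_integral lborel {0..2*pi} (\<lambda>t. cis (real_of_int k * t))"
    by (simp add: set_lebesgue_integral_def)
  also have "\<dots> = interval_lebesgue_integral lborel (ereal 0) (ereal (2*pi)) (\<lambda>t. cis (real_of_int k * t))"
    by (rule interval_integral_Icc[symmetric]) simp
  also have "\<dots> = (if k = 0 then complex_of_real (2*pi) else 0)"
  proof (cases "k = 0")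
    case True
    have "interval_lebesgue_integral lborel (ereal 0) (ereal (2*pi)) (\<lambda>t. 1)
       = (\<lambda>t. complex_of_real t) (2*pi) - (\<lambda>t. complex_of_real t) 0"
    proof (rule interval_integral_FTC_finite)
      show "continuous_on {min 0 (2 * pi)..max 0 (2 * pi)} (\<lambda>t. 1::complex)"
        by (rule continuous_on_const)
      fix x :: real
      have "((\<lambda>t. complex_of_real t) has_vector_derivative complex_of_real 1) (at x within {min 0 (2 * pi)..max 0 (2 * pi)})"
        by (rule has_vector_derivative_of_real) (rule DERIV_ident)
      then show "((\<lambda>t. complex_of_real t) has_vector_derivative 1) (at x within {min 0 (2 * pi)..max 0 (2 * pi)})"
        by simp
    qed
    then show ?thesis using True by simp
  next
    case False
    let ?m = "real_of_int k"
    have m: "?m \<noteq> 0" using False by simp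
    have "interval_lebesgue_integral lborel (ereal 0) (ereal (2*pi)) (\<lambda>t. cis (?m * t))
       = (\<lambda>t. complex_of_real (sin (?m * t) / ?m) + \<i> * complex_of_real (- cos (?m * t) / ?m)) (2*pi)
         - (\<lambda>t. complex_of_real (sin (?m * t) / ?m) + \<i> * complex_of_real (- cos (?m * t) / ?m)) 0"
      apply (rule interval_integral_FTC_finite)
      apply (intro continuous_intros)
      by (rule cis_deriv[OF m])
    also have "\<dots> = 0"
    proof -
      have c: "cis (2*pi*?m) = 1" by (rule cis_multiple_2pi) simp
      have "sin (?m * (2*pi)) = 0" "cos (?m * (2*pi)) = 1"
        using arg_cong[OF c, of Im] arg_cong[OF c, of Re] by (simp_all add: mult.commute)
      then show ?thesis by simp
    qed
    finally show ?thesis using False by simp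
  qed
  finally show ?thesis .
qed


lemma integral_lborel_prod_basis:
  fixes F :: "'a::euclidean_space \<Rightarrow> real \<Rightarrow> complex"
  assumes int: "\<And>b. b \<in> Basis \<Longrightarrow> integrable lborel (F b)"
  shows "(\<integral>x. (\<Prod>b\<in>Basis. F b (x \<bullet> b)) \<partial>(lborel::'a measure)) = (\<Prod>b\<in>Basis. integral\<^sup>L lborel (F b))"
proof -
  interpret P: product_sigma_finite "\<lambda>_::'a. (lborel::real measure)"
    by (simp add: product_sigma_finite_def lborel.sigma_finite_measure_axioms)
  have meas[measurable]: "F b \<in> borel_measurable borel" if "b \<in> Basis" for b
    using borel_measurable_integrable[OF int[OF that]] by simp
  let ?g = "\<lambda>x::'a. (\<Prod>b\<in>Basis. F b (x \<bullet> b))"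
  have gm: "?g \<in> borel_measurable borel"
    by (intro borel_measurable_prod) (auto intro: measurable_compose[OF _ meas] borel_measurable_inner)
  have "integral\<^sup>L (lborel::'a measure) ?g
     = integral\<^sup>L (distr (\<Pi>\<^sub>M b\<in>Basis. lborel) borel (\<lambda>f. \<Sum>b\<in>Basis. f b *\<^sub>R b)) ?g"
    by (rule arg_cong[where f="\<lambda>M. integral\<^sup>L M ?g"], rule lborel_eq)
  also have "\<dots> = (\<integral>f. ?g (\<Sum>b\<in>Basis. f b *\<^sub>R b) \<partial>(\<Pi>\<^sub>M b\<in>Basis. lborel))"
    by (rule integral_distr) (simp_all add: gm)
  also have "\<dots> = (\<integral>f. (\<Prod>b\<in>Basis. F b (f b)) \<partial>(\<Pi>\<^sub>M b\<in>Basis. lborel))"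
  proof -
    have eq: "?g (\<Sum>b\<in>Basis. f b *\<^sub>R b) = (\<Prod>b\<in>Basis. F b (f b))" for f :: "'a \<Rightarrow> real"
    proof -
      have "(\<Sum>b'\<in>Basis. f b' *\<^sub>R b') \<bullet> b = f b" if "b \<in> Basis" for b
        using that by (simp add: inner_sum_left inner_Basis if_distrib sum.delta cong: if_cong)
      then show ?thesis by (intro prod.cong) auto
    qed
    show ?thesis by (simp only: eq)
  qed
  also have "\<dots> = (\<Prod>b\<in>Basis. integral\<^sup>L lborel (F b))"
    by (rule P.product_integral_prod) (auto intro: int)
  finally show ?thesis .
qed

lemma Basis_vec_real: "(Basis :: (real ^ 'd::finite) set) = range (\<lambda>i. axis i 1)"
  by (auto simp: Basis_vec_def)

lemma integral_vec_prod:
  fixes f :: "'d::finite \<Rightarrow> real \<Rightarrow> complex"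
  assumes int: "\<And>i. integrable lborel (f i)"
  shows "(\<integral>x. (\<Prod>i\<in>UNIV. f i (x $ i)) \<partial>(lborel::(real^'d) measure)) = (\<Prod>i\<in>UNIV. integral\<^sup>L lborel (f i))"
proof -
  define F where "F b = f (SOME i. b = axis i (1::real))" for b :: "real ^ 'd"
  have inj: "inj (\<lambda>i::'d. axis i (1::real))" by (auto simp: inj_on_def axis_eq_axis)
  have Fa: "F (axis i 1) = f i" for i
  proof -
    have "(SOME j. axis i (1::real) = axis j 1) = i"
      by (rule some_equality) (auto simp: axis_eq_axis)
    then show ?thesis by (simp add: F_def)
  qed
  have 1: "(\<Prod>i\<in>UNIV. f i (x $ i)) = (\<Prod>b\<in>Basis. F b (x \<bullet> b))" for x :: "real ^ 'd"
    unfolding Basis_vec_real by (subst prod.reindex[OF inj]) (simp add: Fa inner_axis)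
  have 2: "(\<Prod>i\<in>UNIV. integral\<^sup>L lborel (f i)) = (\<Prod>b\<in>(Basis::(real^'d) set). integral\<^sup>L lborel (F b))"
    unfolding Basis_vec_real by (subst prod.reindex[OF inj]) (simp add: Fa)
  have int': "integrable lborel (F b)" if "b \<in> (Basis :: (real^'d) set)" for b
    using that int unfolding Basis_vec_real by (auto simp: Fa)
  show ?thesis unfolding 1 2 by (rule integral_lborel_prod_basis[OF int'])
qed


abbreviation TC :: "(real ^ 'd::finite) set" where
  "TC \<equiv> cbox 0 (\<chi> i. 2 * pi)"

lemma continuous_pair_freq[continuous_intros]: "continuous_on S (\<lambda>x. pair_freq k x)"
  unfolding pair_freq_def by (intro continuous_intros)

lemma indicator_TC: "indicator (TC::(real^'d::finite) set) x = (\<Prod>i\<in>UNIV. indicator {0..2*pi} (x $ i) :: real)"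
proof (cases "x \<in> (TC::(real^'d) set)")
  case True
  then have "x $ i \<in> {0..2*pi}" for i by (auto simp: mem_box_cart)
  then show ?thesis using True by simp
next
  case False
  then obtain i where i: "x $ i \<notin> {0..2*pi}" by (auto simp: mem_box_cart)
  have "(\<Prod>i\<in>UNIV. indicator {0..2*pi} (x $ i) :: real) = 0"
  proof (rule prod_zero)
    have "indicator {0..2*pi} (x $ i) = (0::real)" using i by simp
    then show "\<exists>a\<in>UNIV. indicator {0..2*pi} (x $ a) = (0::real)" by blast
  qed simp
  then show ?thesis using False by simp
qed

lemma cis_sum': "cis (\<Sum>i\<in>A. f i) = (\<Prod>i\<in>A. cis (f i))"
  by (induction A rule: infinite_finite_induct) (auto simp: cis_mult[symmetric])

lemma integral_torus_cis:
  fixes k :: "int ^ 'd::finite"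
  shows "integral\<^sup>L lborel (\<lambda>x::real^'d. indicator TC x *\<^sub>R cis (pair_freq k x))
     = (if k = 0 then complex_of_real ((2*pi) ^ CARD('d)) else 0)"
proof -
  define f where "f i t = indicator {0..2*pi} t *\<^sub>R cis (real_of_int (k $ i) * t)" for i t
  have eq: "indicator TC x *\<^sub>R cis (pair_freq k x) = (\<Prod>i\<in>UNIV. f i (x $ i))" for x :: "real^'d"
    unfolding f_def indicator_TC pair_freq_def cis_sum' scaleR_conv_of_real
    by (simp add: prod.distrib of_real_prod)
  have int: "integrable lborel (f i)" for i
    unfolding f_def by (intro borel_integrable_compact compact_Icc continuous_intros)
  have "integral\<^sup>L lborel (\<lambda>x::real^'d. indicator TC x *\<^sub>R cis (pair_freq k x))
      = (\<Prod>i\<in>UNIV. integral\<^sup>L lborel (f i))"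
    unfolding eq by (rule integral_vec_prod[OF int])
  also have "\<dots> = (\<Prod>i\<in>UNIV. if k $ i = 0 then complex_of_real (2*pi) else 0)"
    unfolding f_def by (simp add: integral_cis_1d)
  also have "\<dots> = (if k = 0 then complex_of_real ((2*pi) ^ CARD('d)) else 0)"
  proof (cases "k = 0")
    case True then show ?thesis by (simp add: of_real_power)
  next
    case False
    then obtain i where i: "k $ i \<noteq> 0" by (auto simp: vec_eq_iff)
    have "(\<Prod>i\<in>UNIV. if k $ i = 0 then complex_of_real (2*pi) else 0) = 0"
      using i by (intro prod_zero) (auto intro!: bexI[of _ i])
    then show ?thesis using False by simp
  qed
  finally show ?thesis .
qed

lemma integrable_TC:
  assumes "continuous_on UNIV f"
  shows "integrable lborel (\<lambda>x::real^'d::finite. indicator TC x * (f x :: real))"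
  using borel_integrable_compact[of "TC::(real^'d) set" f] continuous_on_subset[OF assms, of TC]
  by simp

lemma integral_TC_cos:
  "integral\<^sup>L lborel (\<lambda>x::real^'d::finite. indicator TC x * cos (pair_freq k x))
     = (if k = 0 then (2*pi) ^ CARD('d) else 0)"
proof -
  have ci: "complex_integrable lborel (\<lambda>x::real^'d. indicator TC x *\<^sub>R cis (pair_freq k x))"
    by (intro borel_integrable_compact compact_cbox continuous_intros)
  have "integral\<^sup>L lborel (\<lambda>x::real^'d. indicator TC x * cos (pair_freq k x))
      = integral\<^sup>L lborel (\<lambda>x::real^'d. Re (indicator TC x *\<^sub>R cis (pair_freq k x)))"
    by simp
  also have "\<dots> = Re (integral\<^sup>L lborel (\<lambda>x::real^'d. indicator TC x *\<^sub>R cis (pair_freq k x)))"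
    by (rule integral_Re[OF ci])
  finally show ?thesis by (simp add: integral_torus_cis)
qed

lemma integral_TC_sin:
  "integral\<^sup>L lborel (\<lambda>x::real^'d::finite. indicator TC x * sin (pair_freq k x)) = 0"
proof -
  have ci: "complex_integrable lborel (\<lambda>x::real^'d. indicator TC x *\<^sub>R cis (pair_freq k x))"
    by (intro borel_integrable_compact compact_cbox continuous_intros)
  have "integral\<^sup>L lborel (\<lambda>x::real^'d. indicator TC x * sin (pair_freq k x))
      = integral\<^sup>L lborel (\<lambda>x::real^'d. Im (indicator TC x *\<^sub>R cis (pair_freq k x)))"
    by simp
  also have "\<dots> = Im (integral\<^sup>L lborel (\<lambda>x::real^'d. indicator TC x *\<^sub>R cis (pair_freq k x)))"
    by (rule integral_Im[OF ci])
  finally show ?thesis by (simp add: integral_torus_cis)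
qed

definition cc :: "int ^ 'd::finite \<Rightarrow> real ^ 'd \<Rightarrow> real" where
  "cc n x = cos (pair_freq n x) - sin (pair_freq n x)"

definition acoef :: "int ^ 'd::finite \<Rightarrow> real" where
  "acoef n = japanese n powr (- real CARD('d) / 2)"

lemma acoef_pos: "acoef (n::int^'d::finite) > 0"
proof -
  have "japanese n > 0" by (rule japanese_pos)
  then show ?thesis unfolding acoef_def by simp
qed

lemma acoef_uminus: "acoef (- n) = acoef (n::int^'d::finite)"
  unfolding acoef_def by (simp add: japanese_uminus)

lemma acoef_sq: "(acoef (n::int^'d::finite))\<^sup>2 = japanese n powr (- real CARD('d))"
  unfolding acoef_def using japanese_pos[of n]
  by (simp add: power2_eq_square powr_add[symmetric])

lemma continuous_cc[continuous_intros]: "continuous_on S (\<lambda>x. cc n x)"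
  unfolding cc_def by (intro continuous_intros)

lemma cc_mult: "cc n x * cc m x = cos (pair_freq (n - m) x) - sin (pair_freq (n + m) x)"
  unfolding cc_def pair_freq_diff pair_freq_add cos_diff sin_add by (simp add: algebra_simps)

definition IT :: "(real ^ 'd::finite \<Rightarrow> real) \<Rightarrow> real" where
  "IT f = integral\<^sup>L lborel (\<lambda>x. indicator TC x * f x)"

lemma torus_integral_IT: "torus_integral (f::real^'d::finite \<Rightarrow> real) = IT f / (2 * pi) ^ CARD('d)"
  unfolding torus_integral_def IT_def set_lebesgue_integral_def by simp

lemma IT_sum:
  fixes f :: "'i \<Rightarrow> real^'d::finite \<Rightarrow> real"
  assumes "\<And>i. i \<in> A \<Longrightarrow> continuous_on UNIV (f i)"
  shows "IT (\<lambda>x. \<Sum>i\<in>A. f i x) = (\<Sum>i\<in>A. IT (f i))"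
proof -
  have "IT (\<lambda>x. \<Sum>i\<in>A. f i x) = integral\<^sup>L lborel (\<lambda>x. \<Sum>i\<in>A. indicator TC x * f i x)"
    unfolding IT_def by (simp add: sum_distrib_left)
  also have "\<dots> = (\<Sum>i\<in>A. IT (f i))"
    unfolding IT_def by (rule Bochner_Integration.integral_sum) (rule integrable_TC[OF assms])
  finally show ?thesis .
qed

lemma IT_diff:
  fixes f g :: "real^'d::finite \<Rightarrow> real"
  assumes "continuous_on UNIV f" "continuous_on UNIV g"
  shows "IT (\<lambda>x. f x - g x) = IT f - IT g"
proof -
  have "IT (\<lambda>x. f x - g x) = integral\<^sup>L lborel (\<lambda>x. indicator TC x * f x - indicator TC x * g x)"
    unfolding IT_def by (simp add: algebra_simps)
  also have "\<dots> = IT f - IT g"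
    unfolding IT_def by (rule Bochner_Integration.integral_diff) (rule integrable_TC[OF assms(1)], rule integrable_TC[OF assms(2)])
  finally show ?thesis .
qed

lemma IT_cmult: "IT (\<lambda>x. c * f x) = c * IT f"
  unfolding IT_def by (simp add: mult.left_commute)

lemma IT_const: "IT (\<lambda>x::real^'d::finite. c) = c * (2 * pi) ^ CARD('d)"
proof -
  have "IT (\<lambda>x::real^'d. c) = IT (\<lambda>x. c * cos (pair_freq (0::int^'d) x))"
    by simp
  also have "\<dots> = c * IT (\<lambda>x. cos (pair_freq (0::int^'d) x))"
    by (rule IT_cmult)
  also have "\<dots> = c * (2 * pi) ^ CARD('d)"
    unfolding IT_def by (simp only: integral_TC_cos) simp
  finally show ?thesis .
qed

lemma IT_cc_mult: "IT (\<lambda>x. cc n x * cc m x) = (if n = m then (2 * pi) ^ CARD('d) else 0)" for n m :: "int^'d::finite"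
proof -
  have "IT (\<lambda>x. cc n x * cc m x) = IT (\<lambda>x. cos (pair_freq (n - m) x)) - IT (\<lambda>x. sin (pair_freq (n + m) x))"
    unfolding cc_mult by (rule IT_diff) (intro continuous_intros)+
  also have "\<dots> = (if n = m then (2 * pi) ^ CARD('d) else 0)"
    unfolding IT_def integral_TC_cos integral_TC_sin by simp
  finally show ?thesis .
qed

lemma parseval:
  fixes B :: "(int^'d::finite) set"
  assumes "finite B"
  shows "IT (\<lambda>x. (\<Sum>n\<in>B. \<alpha> n * cc n x)\<^sup>2) = (2 * pi) ^ CARD('d) * (\<Sum>n\<in>B. (\<alpha> n)\<^sup>2)"
proof -
  have "IT (\<lambda>x. (\<Sum>n\<in>B. \<alpha> n * cc n x)\<^sup>2) = IT (\<lambda>x. \<Sum>n\<in>B. \<Sum>m\<in>B. \<alpha> n * \<alpha> m * (cc n x * cc m x))"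
    unfolding power2_eq_square sum_product by (simp add: algebra_simps)
  also have "\<dots> = (\<Sum>n\<in>B. \<Sum>m\<in>B. IT (\<lambda>x. \<alpha> n * \<alpha> m * (cc n x * cc m x)))"
    by (subst IT_sum, intro continuous_intros, intro sum.cong refl IT_sum continuous_intros)
  also have "\<dots> = (\<Sum>n\<in>B. \<Sum>m\<in>B. \<alpha> n * \<alpha> m * (if n = m then (2 * pi) ^ CARD('d) else 0))"
    by (simp only: IT_cmult IT_cc_mult)
  also have "\<dots> = (2 * pi) ^ CARD('d) * (\<Sum>n\<in>B. (\<alpha> n)\<^sup>2)"
    using assms by (simp add: if_distrib sum.delta sum_distrib_left sum_distrib_right power2_eq_square mult.commute cong: if_cong)
  finally show ?thesis .
qed

lemma gcoef_Re: "Re (gcoef \<xi> n) = (\<xi> n + \<xi> (- n)) / 2"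
  unfolding gcoef_def by simp

lemma gcoef_Im: "Im (gcoef \<xi> n) = (\<xi> n - \<xi> (- n)) / 2"
  unfolding gcoef_def by simp

lemma uN_eq: "uN N \<xi> x = (\<Sum>n\<in>freq_ball N. acoef n * \<xi> n * cc n x)"
proof -
  let ?B = "freq_ball N :: (int^'d) set"
  let ?t = "\<lambda>n. pair_freq n x"
  have trm: "Re (complex_of_real (acoef n) * gcoef \<xi> n * e_n n x)
      = acoef n / 2 * \<xi> n * (cos (?t n) - sin (?t n)) + acoef n / 2 * \<xi> (- n) * (cos (?t n) + sin (?t n))" for n
    unfolding e_n_def by (simp add: gcoef_Re gcoef_Im algebra_simps add_divide_distrib diff_divide_distrib)
  have "uN N \<xi> x = (\<Sum>n\<in>?B. Re (complex_of_real (acoef n) * gcoef \<xi> n * e_n n x))"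
    unfolding uN_def acoef_def by (simp add: Re_sum)
  also have "\<dots> = (\<Sum>n\<in>?B. acoef n / 2 * \<xi> n * (cos (?t n) - sin (?t n)))
                + (\<Sum>n\<in>?B. acoef n / 2 * \<xi> (- n) * (cos (?t n) + sin (?t n)))"
    unfolding trm by (simp add: sum.distrib)
  also have "(\<Sum>n\<in>?B. acoef n / 2 * \<xi> (- n) * (cos (?t n) + sin (?t n)))
           = (\<Sum>n\<in>?B. acoef n / 2 * \<xi> n * (cos (?t n) - sin (?t n)))"
    by (rule sum.reindex_bij_witness[of _ uminus uminus]) (auto simp: uminus_freq_ball acoef_uminus pair_freq_uminus)
  finally show ?thesis unfolding cc_def by (simp add: sum.distrib[symmetric] algebra_simps)
qed


lemma cos_lower: "cos (t::real) \<ge> 1 - t\<^sup>2 / 2"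
proof -
  have "cos t = 1 - 2 * (sin (t/2))\<^sup>2" using cos_double_sin[of "t/2"] by simp
  moreover have "(sin (t/2))\<^sup>2 \<le> (t/2)\<^sup>2"
    using abs_sin_x_le_abs_x[of "t/2"] by (metis abs_ge_zero power2_abs power_mono)
  ultimately show ?thesis by (simp add: power_divide)
qed

lemma cc_ge_half_aux:
  assumes "\<bar>t::real\<bar> \<le> 1/4"
  shows "cos t - sin t \<ge> 1/2"
proof -
  have "t\<^sup>2 \<le> (1/4)\<^sup>2" using assms by (metis abs_ge_zero power2_abs power_mono)
  then have "cos t \<ge> 1 - 1/32" using cos_lower[of t] by (simp add: power2_eq_square)
  moreover have "sin t \<le> 1/4" using abs_sin_x_le_abs_x[of t] assms by linarith
  ultimately show ?thesis by linarith
qed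

definition SC :: "nat \<Rightarrow> (real ^ 'd::finite) set" where
  "SC N = cbox 0 (\<chi> i. 1 / (4 * real CARD('d) * real N))"

lemma pair_freq_small:
  fixes n :: "int ^ 'd::finite"
  assumes n: "n \<in> freq_ball N" and x: "x \<in> SC N" and N: "N \<ge> 1"
  shows "\<bar>pair_freq n x\<bar> \<le> 1/4"
proof -
  let ?d = "real CARD('d)"
  have dpos: "?d > 0" by simp
  have x0: "0 \<le> x $ i" and x1: "x $ i \<le> 1 / (4 * ?d * real N)" for i
    using x by (auto simp: SC_def mem_box_cart)
  have ni: "\<bar>real_of_int (n $ i)\<bar> \<le> real N" for i
    using comp_le_freq_norm[of n i] n by (simp add: freq_ball_def)
  have "\<bar>pair_freq n x\<bar> \<le> (\<Sum>i\<in>UNIV. \<bar>real_of_int (n $ i) * x $ i\<bar>)"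
    unfolding pair_freq_def by (rule sum_abs)
  also have "\<dots> \<le> (\<Sum>i\<in>(UNIV::'d set). real N * (1 / (4 * ?d * real N)))"
  proof (rule sum_mono)
    fix i
    have "\<bar>real_of_int (n $ i) * x $ i\<bar> = \<bar>real_of_int (n $ i)\<bar> * x $ i"
      using x0[of i] by (simp add: abs_mult)
    also have "\<dots> \<le> real N * (1 / (4 * ?d * real N))"
      by (intro mult_mono ni x1 x0) simp_all
    finally show "\<bar>real_of_int (n $ i) * x $ i\<bar> \<le> real N * (1 / (4 * ?d * real N))" .
  qed
  also have "\<dots> = 1/4" using N dpos by (simp add: field_simps)
  finally show ?thesis .
qed

lemma cc_ge_half:
  fixes n :: "int ^ 'd::finite"
  assumes "n \<in> freq_ball N" "x \<in> SC N" "N \<ge> 1"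
  shows "cc n x \<ge> 1/2"
  unfolding cc_def by (rule cc_ge_half_aux[OF pair_freq_small[OF assms]])

lemma SC_sub_TC: "N \<ge> 1 \<Longrightarrow> SC N \<subseteq> (TC :: (real^'d::finite) set)"
proof
  fix x :: "real^'d" assume N: "N \<ge> 1" and x: "x \<in> SC N"
  have "(1::nat) \<le> CARD('d) * N" using N by (simp add: Suc_le_eq)
  then have "1 \<le> real CARD('d) * real N" by (metis of_nat_1 of_nat_le_iff of_nat_mult)
  then have "1 / (4 * real CARD('d) * real N) \<le> 1" by (simp add: field_simps)
  also have "1 \<le> 2 * pi" using pi_gt3 by linarith
  finally have b: "1 / (4 * real CARD('d) * real N) \<le> 2 * pi" .
  have "0 \<le> x $ i \<and> x $ i \<le> 1 / (4 * real CARD('d) * real N)" for i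
    using x by (auto simp: SC_def mem_box_cart)
  then have "0 \<le> x $ i \<and> x $ i \<le> 2 * pi" for i
    using b order_trans by blast
  then show "x \<in> TC" by (simp add: mem_box_cart)
qed

lemma measure_SC: "N \<ge> 1 \<Longrightarrow> measure lborel (SC N :: (real^'d::finite) set) = (1 / (4 * real CARD('d) * real N)) ^ CARD('d)"
proof -
  assume N: "N \<ge> 1"
  let ?b = "(\<chi> i. 1 / (4 * real CARD('d) * real N)) :: real^'d"
  have "0 \<in> cbox 0 ?b" using N by (simp add: mem_box_cart)
  then have "cbox 0 ?b \<noteq> {}" by blast
  then show ?thesis unfolding SC_def by (subst content_cbox_cart) simp_all
qed


abbreviation GD :: "real measure" where
  "GD \<equiv> density lborel (\<lambda>x. ennreal (std_normal_density x))"

lemma prob_GD: "prob_space GD"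
  by (rule prob_space_normal_density) simp

lemma gauss_space_eq: "gauss_space = PiM UNIV (\<lambda>_. GD)"
  by (simp add: gauss_space_def)

lemma gauss_event:
  fixes B :: "(int ^ 'd::finite) set"
  assumes B: "finite B"
  shows "{\<xi>. \<forall>n\<in>B. l n \<le> \<xi> n \<and> \<xi> n \<le> r n} \<in> sets (gauss_space :: (int ^ 'd \<Rightarrow> real) measure)"
    and "emeasure (gauss_space :: (int ^ 'd \<Rightarrow> real) measure) {\<xi>. \<forall>n\<in>B. l n \<le> \<xi> n \<and> \<xi> n \<le> r n}
         = (\<Prod>n\<in>B. emeasure GD {l n..r n})"
proof -
  have sp: "space (PiM UNIV (\<lambda>_::int^'d. GD)) = UNIV"
    by (simp add: space_PiM)
  have eq: "{\<xi>. \<forall>n\<in>B. l n \<le> \<xi> n \<and> \<xi> n \<le> r n} = prod_emb UNIV (\<lambda>_. GD) B (PiE B (\<lambda>n. {l n..r n}))"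
    unfolding prod_emb_def sp by (auto simp: PiE_iff)
  show "{\<xi>. \<forall>n\<in>B. l n \<le> \<xi> n \<and> \<xi> n \<le> r n} \<in> sets (gauss_space :: (int ^ 'd \<Rightarrow> real) measure)"
    unfolding eq gauss_space_eq by (rule sets_PiM_I) (simp_all add: B)
  show "emeasure (gauss_space :: (int ^ 'd \<Rightarrow> real) measure) {\<xi>. \<forall>n\<in>B. l n \<le> \<xi> n \<and> \<xi> n \<le> r n}
         = (\<Prod>n\<in>B. emeasure GD {l n..r n})"
    unfolding eq gauss_space_eq by (rule emeasure_PiM_emb) (simp_all add: B prob_GD)
qed

lemma e_ge_2: "exp (1::real) \<ge> 2"
  using exp_ge_add_one_self[of 1] by simp

lemma GD_interval_lower:
  assumes b: "b \<ge> 0" and eta: "0 < \<eta>" "\<eta> \<le> 1"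
  shows "emeasure GD {b..b+\<eta>} \<ge> ennreal (\<eta> * exp (- b\<^sup>2 - 3))"
proof -
  let ?c = "std_normal_density (b + \<eta>)"
  have mono: "std_normal_density t \<ge> ?c" if "t \<in> {b..b+\<eta>}" for t
  proof -
    have "t\<^sup>2 \<le> (b + \<eta>)\<^sup>2" using that b eta by (intro power_mono) auto
    then have "exp (- (b + \<eta>)\<^sup>2 / 2) \<le> exp (- t\<^sup>2 / 2)" by simp
    then show ?thesis unfolding std_normal_density_def by (rule mult_left_mono) simp
  qed
  have 1: "emeasure GD {b..b+\<eta>} = (\<integral>\<^sup>+x\<in>{b..b+\<eta>}. ennreal (std_normal_density x) \<partial>lborel)"
    by (rule emeasure_density) auto
  have 2: "(\<integral>\<^sup>+x\<in>{b..b+\<eta>}. ennreal ?c \<partial>lborel) \<le> (\<integral>\<^sup>+x\<in>{b..b+\<eta>}. ennreal (std_normal_density x) \<partial>lborel)"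
    by (intro nn_integral_mono) (auto simp: mono split: split_indicator intro: ennreal_leI)
  have 3: "(\<integral>\<^sup>+x\<in>{b..b+\<eta>}. ennreal ?c \<partial>lborel) = ennreal ?c * ennreal \<eta>"
    using eta by (subst nn_integral_cmult_indicator) auto
  have 4: "?c * \<eta> \<ge> \<eta> * exp (- b\<^sup>2 - 3)"
  proof -
    have s0: "0 \<le> (b - \<eta>)\<^sup>2" by simp
    have "(b + \<eta>)\<^sup>2 \<le> 2 * b\<^sup>2 + 2 * \<eta>\<^sup>2" using s0 by (simp add: power2_eq_square algebra_simps)
    moreover have "\<eta>\<^sup>2 \<le> 1" using eta by (simp add: power_le_one)
    ultimately have "(b + \<eta>)\<^sup>2 \<le> 2 * b\<^sup>2 + 2" by linarith
    then have e1: "exp (- (b + \<eta>)\<^sup>2 / 2) \<ge> exp (- b\<^sup>2 - 1)" by simp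
    have "sqrt (2 * pi) \<le> exp 2"
    proof -
      have "2 * pi \<le> 16" using pi_less_4 by linarith
      also have "(16::real) = 2 ^ 4" by simp
      also have "\<dots> \<le> exp 1 ^ 4" by (rule power_mono[OF e_ge_2]) simp
      also have "\<dots> = (exp 2)\<^sup>2" by (simp flip: exp_of_nat_mult power_mult)
      finally have "sqrt (2 * pi) \<le> sqrt ((exp 2)\<^sup>2)" by (rule real_sqrt_le_mono)
      then show ?thesis by simp
    qed
    then have e2: "1 / sqrt (2 * pi) \<ge> exp (-2)"
      by (simp add: exp_minus field_simps)
    have "?c = 1 / sqrt (2 * pi) * exp (- (b + \<eta>)\<^sup>2 / 2)" by (simp add: std_normal_density_def)
    also have "\<dots> \<ge> exp (-2) * exp (- b\<^sup>2 - 1)"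
      by (intro mult_mono e1 e2) auto
    also have "exp (-2) * exp (- b\<^sup>2 - 1) = exp (- b\<^sup>2 - 3)" by (simp flip: exp_add)
    finally show ?thesis using eta by (simp add: mult.commute)
  qed
  then have A: "ennreal (\<eta> * exp (- b\<^sup>2 - 3)) \<le> ennreal (?c * \<eta>)" by (rule ennreal_leI)
  have B: "ennreal (?c * \<eta>) = ennreal ?c * ennreal \<eta>"
    using eta by (intro ennreal_mult) (auto simp: std_normal_density_def)
  have "ennreal (\<eta> * exp (- b\<^sup>2 - 3)) \<le> ennreal ?c * ennreal \<eta>" using A B by simp
  also have "\<dots> \<le> (\<integral>\<^sup>+x\<in>{b..b+\<eta>}. ennreal (std_normal_density x) \<partial>lborel)" using 2 3 by simp
  also have "\<dots> = emeasure GD {b..b+\<eta>}" using 1 by simp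
  finally show ?thesis .
qed


lemma P_bounds:
  fixes B :: "'i set" and a \<xi> :: "'i \<Rightarrow> real"
  assumes fin: "finite B" and apos: "\<And>n. n \<in> B \<Longrightarrow> a n > 0"
    and c0: "c0 \<ge> 0" "real (card B) * c0\<^sup>2 = \<sigma>" and sig: "\<sigma> = (\<Sum>n\<in>B. (a n)\<^sup>2)"
    and eta: "0 < \<eta>" "\<eta> \<le> 1" "3 * \<eta> * \<sigma> \<le> K"
    and ev: "\<And>n. n \<in> B \<Longrightarrow> c0 / a n \<le> \<xi> n \<and> \<xi> n \<le> c0 / a n + \<eta>"
  shows "\<sigma> \<le> (\<Sum>n\<in>B. (a n * \<xi> n)\<^sup>2)" and "(\<Sum>n\<in>B. (a n * \<xi> n)\<^sup>2) \<le> \<sigma> + K"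
    and "\<And>n. n \<in> B \<Longrightarrow> a n * \<xi> n \<ge> c0"
proof -
  have lo: "a n * \<xi> n \<ge> c0" if "n \<in> B" for n
  proof -
    have "c0 = a n * (c0 / a n)" using apos[OF that] by simp
    also have "\<dots> \<le> a n * \<xi> n" using ev[OF that] apos[OF that] by (intro mult_left_mono) auto
    finally show ?thesis .
  qed
  then show "\<And>n. n \<in> B \<Longrightarrow> a n * \<xi> n \<ge> c0" .
  have "\<sigma> = (\<Sum>n\<in>B. c0\<^sup>2)" using c0 by simp
  also have "\<dots> \<le> (\<Sum>n\<in>B. (a n * \<xi> n)\<^sup>2)"
    using lo c0 by (intro sum_mono power_mono) auto
  finally show "\<sigma> \<le> (\<Sum>n\<in>B. (a n * \<xi> n)\<^sup>2)" .
  have up: "(a n * \<xi> n)\<^sup>2 \<le> c0\<^sup>2 * (1 + \<eta>) + (a n)\<^sup>2 * (\<eta> + \<eta>\<^sup>2)" if n: "n \<in> B" for n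
  proof -
    have an: "a n > 0" using apos[OF n] .
    have "a n * \<xi> n \<le> a n * (c0 / a n + \<eta>)" using ev[OF n] an by (intro mult_left_mono) auto
    also have "\<dots> = c0 + a n * \<eta>" using an by (simp add: field_simps)
    finally have "a n * \<xi> n \<le> c0 + a n * \<eta>" .
    moreover have "0 \<le> a n * \<xi> n" using lo[OF n] c0 by linarith
    ultimately have "(a n * \<xi> n)\<^sup>2 \<le> (c0 + a n * \<eta>)\<^sup>2" by (intro power_mono) auto
    also have "\<dots> = c0\<^sup>2 + \<eta> * (2 * c0 * a n) + (a n)\<^sup>2 * \<eta>\<^sup>2"
      by (simp add: power2_eq_square algebra_simps)
    also have "\<dots> \<le> c0\<^sup>2 + \<eta> * (c0\<^sup>2 + (a n)\<^sup>2) + (a n)\<^sup>2 * \<eta>\<^sup>2"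
    proof -
      have s0: "0 \<le> (c0 - a n)\<^sup>2" by simp
      have "2 * c0 * a n \<le> c0\<^sup>2 + (a n)\<^sup>2"
        using s0 by (simp add: power2_eq_square algebra_simps)
      then show ?thesis using eta by (simp add: mult_left_mono)
    qed
    also have "\<dots> = c0\<^sup>2 * (1 + \<eta>) + (a n)\<^sup>2 * (\<eta> + \<eta>\<^sup>2)" by (simp add: algebra_simps)
    finally show ?thesis .
  qed
  have "(\<Sum>n\<in>B. (a n * \<xi> n)\<^sup>2) \<le> (\<Sum>n\<in>B. c0\<^sup>2 * (1 + \<eta>) + (a n)\<^sup>2 * (\<eta> + \<eta>\<^sup>2))"
    using up by (rule sum_mono)
  also have "\<dots> = \<sigma> * (1 + \<eta>) + \<sigma> * (\<eta> + \<eta>\<^sup>2)"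
    using c0 sig by (simp add: sum.distrib sum_distrib_right[symmetric])
  also have "\<dots> \<le> \<sigma> + 3 * \<eta> * \<sigma>"
  proof -
    have h1: "\<sigma> \<ge> 0" using sig by (simp add: sum_nonneg)
    have h2: "\<eta>\<^sup>2 \<le> \<eta>" using eta by (simp add: power2_eq_square mult_left_le)
    have "\<sigma> * \<eta>\<^sup>2 \<le> \<sigma> * \<eta>" by (rule mult_left_mono[OF h2 h1])
    then show ?thesis by (simp add: algebra_simps)
  qed
  also have "\<dots> \<le> \<sigma> + K" using eta by simp
  finally show "(\<Sum>n\<in>B. (a n * \<xi> n)\<^sup>2) \<le> \<sigma> + K" .
qed

lemma continuous_uN: "continuous_on S (\<lambda>x. uN N \<xi> x)"
  unfolding uN_eq by (intro continuous_intros)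

lemma IT_uN_sq:
  "IT (\<lambda>x. (uN N \<xi> x)\<^sup>2) = (2 * pi) ^ CARD('d) * (\<Sum>n\<in>(freq_ball N :: (int^'d::finite) set). (acoef n * \<xi> n)\<^sup>2)"
proof -
  have "IT (\<lambda>x::real^'d. (uN N \<xi> x)\<^sup>2) = IT (\<lambda>x. (\<Sum>n\<in>(freq_ball N :: (int^'d) set). (acoef n * \<xi> n) * cc n x)\<^sup>2)"
    unfolding uN_eq by simp
  also have "\<dots> = (2 * pi) ^ CARD('d) * (\<Sum>n\<in>(freq_ball N :: (int^'d) set). (acoef n * \<xi> n)\<^sup>2)"
    by (rule parseval[OF finite_freq_ball])
  finally show ?thesis .
qed

lemma IT_add:
  fixes f g :: "real^'d::finite \<Rightarrow> real"
  assumes "continuous_on UNIV f" "continuous_on UNIV g"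
  shows "IT (\<lambda>x. f x + g x) = IT f + IT g"
proof -
  have "IT (\<lambda>x. f x + g x) = integral\<^sup>L lborel (\<lambda>x. indicator TC x * f x + indicator TC x * g x)"
    unfolding IT_def by (simp add: algebra_simps)
  also have "\<dots> = IT f + IT g"
    unfolding IT_def by (rule Bochner_Integration.integral_add) (rule integrable_TC[OF assms(1)], rule integrable_TC[OF assms(2)])
  finally show ?thesis .
qed

lemma pi_pow_pos: "(2 * pi) ^ n > (0::real)"
  by simp

lemma torus_wick2:
  "torus_integral (wick2 TYPE('d::finite) N \<xi>)
     = (\<Sum>n\<in>(freq_ball N :: (int^'d) set). (acoef n * \<xi> n)\<^sup>2) - sigmaN TYPE('d) N"
proof -
  have "IT (wick2 TYPE('d) N \<xi>) = IT (\<lambda>x. (uN N \<xi> x)\<^sup>2) - IT (\<lambda>x::real^'d. sigmaN TYPE('d) N)"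
    unfolding wick2_def[abs_def] by (rule IT_diff) (intro continuous_intros continuous_uN)+
  then show ?thesis
    unfolding torus_integral_IT IT_uN_sq IT_const using pi_pow_pos[of "CARD('d)"]
    by (simp add: field_simps)
qed

lemma torus_wick4:
  "torus_integral (wick4 TYPE('d::finite) N \<xi>)
     = IT (\<lambda>x::real^'d. (uN N \<xi> x) ^ 4) / (2 * pi) ^ CARD('d)
       - 6 * sigmaN TYPE('d) N * (\<Sum>n\<in>(freq_ball N :: (int^'d) set). (acoef n * \<xi> n)\<^sup>2)
       + 3 * (sigmaN TYPE('d) N)\<^sup>2"
proof -
  let ?s = "sigmaN TYPE('d) N"
  have "IT (wick4 TYPE('d) N \<xi>) = IT (\<lambda>x::real^'d. (uN N \<xi> x) ^ 4 - 6 * ?s * (uN N \<xi> x)\<^sup>2) + IT (\<lambda>x::real^'d. 3 * ?s\<^sup>2)"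
    unfolding wick4_def[abs_def] by (rule IT_add) (intro continuous_intros continuous_uN)+
  also have "IT (\<lambda>x::real^'d. (uN N \<xi> x) ^ 4 - 6 * ?s * (uN N \<xi> x)\<^sup>2)
      = IT (\<lambda>x::real^'d. (uN N \<xi> x) ^ 4) - IT (\<lambda>x::real^'d. 6 * ?s * (uN N \<xi> x)\<^sup>2)"
    by (rule IT_diff) (intro continuous_intros continuous_uN)+
  finally show ?thesis
    unfolding torus_integral_IT IT_cmult IT_uN_sq IT_const using pi_pow_pos[of "CARD('d)"]
    by (simp add: field_simps)
qed

lemma IT_uN4_lower:
  fixes \<xi> :: "int^'d::finite \<Rightarrow> real"
  assumes N: "N \<ge> 1" and nn: "\<And>n. n \<in> freq_ball N \<Longrightarrow> \<xi> n \<ge> 0"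
  shows "IT (\<lambda>x::real^'d. (uN N \<xi> x) ^ 4)
    \<ge> measure lborel (SC N :: (real^'d) set) * ((\<Sum>n\<in>(freq_ball N :: (int^'d) set). acoef n * \<xi> n) / 2) ^ 4"
proof -
  let ?S = "(\<Sum>n\<in>(freq_ball N :: (int^'d) set). acoef n * \<xi> n)"
  let ?L = "(?S / 2) ^ 4"
  have ptw: "uN N \<xi> x \<ge> ?S / 2" if x: "x \<in> SC N" for x :: "real^'d"
  proof -
    have "?S / 2 = (\<Sum>n\<in>(freq_ball N :: (int^'d) set). acoef n * \<xi> n * (1/2))"
      by (simp add: sum_divide_distrib)
    also have "\<dots> \<le> (\<Sum>n\<in>(freq_ball N :: (int^'d) set). acoef n * \<xi> n * cc n x)"
    proof (rule sum_mono)
      fix n :: "int^'d" assume n: "n \<in> freq_ball N"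
      have "0 \<le> acoef n * \<xi> n" using acoef_pos[of n] nn[OF n] by simp
      then show "acoef n * \<xi> n * (1/2) \<le> acoef n * \<xi> n * cc n x"
        by (rule mult_left_mono[OF cc_ge_half[OF n x N]])
    qed
    finally show ?thesis unfolding uN_eq .
  qed
  have S0: "?S \<ge> 0"
  proof (rule sum_nonneg)
    fix n :: "int^'d" assume "n \<in> freq_ball N"
    then show "0 \<le> acoef n * \<xi> n" using acoef_pos[of n] nn[of n] by simp
  qed
  have ptw4: "indicator (SC N) x * ?L \<le> indicator TC x * (uN N \<xi> x) ^ 4" for x :: "real^'d"
  proof (cases "x \<in> SC N")
    case True
    then have "x \<in> TC" using SC_sub_TC[OF N] by blast
    moreover have "?L \<le> (uN N \<xi> x) ^ 4" using ptw[OF True] S0 by (intro power_mono) auto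
    ultimately show ?thesis using True by simp
  next
    case False
    then show ?thesis by (simp add: zero_le_even_power)
  qed
  have int1: "integrable lborel (\<lambda>x::real^'d. indicator (SC N) x * ?L)"
    unfolding SC_def using borel_integrable_compact[of "cbox 0 (\<chi> i. 1 / (4 * real CARD('d) * real N)) :: (real^'d) set" "\<lambda>_. ?L"]
    by (simp add: continuous_on_const)
  have int2: "integrable lborel (\<lambda>x::real^'d. indicator TC x * (uN N \<xi> x) ^ 4)"
    by (rule integrable_TC) (intro continuous_intros continuous_uN)
  have "integral\<^sup>L lborel (\<lambda>x::real^'d. indicator (SC N) x * ?L) \<le> IT (\<lambda>x::real^'d. (uN N \<xi> x) ^ 4)"
    unfolding IT_def by (rule integral_mono[OF int1 int2 ptw4])
  moreover have "integral\<^sup>L lborel (\<lambda>x::real^'d. indicator (SC N) x * ?L) = measure lborel (SC N :: (real^'d) set) * ?L"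
    by (simp add: integral_mult_left_zero)
  ultimately show ?thesis by simp
qed



definition McN :: "'d::finite itself \<Rightarrow> nat \<Rightarrow> real" where
  "McN T N = real (card (freq_ball N :: (int^'d) set))"

definition etaN :: "'d::finite itself \<Rightarrow> nat \<Rightarrow> real \<Rightarrow> real" where
  "etaN T N K = min 1 (K / (3 * sigmaN T N))"

definition volN :: "'d::finite itself \<Rightarrow> nat \<Rightarrow> real" where
  "volN T N = (1 / (4 * real CARD('d) * real N)) ^ CARD('d) / (2 * pi) ^ CARD('d)"

definition ExN :: "real \<Rightarrow> real \<Rightarrow> 'd::finite itself \<Rightarrow> nat \<Rightarrow> real" where
  "ExN s K T N = McN T N * ln (etaN T N K) - sigmaN T N * (2 * real N) ^ CARD('d) - 3 * McN T N
     + s / 4 * (volN T N * ((McN T N)\<^sup>2 * (sigmaN T N)\<^sup>2 / 16) - 6 * sigmaN T N * (sigmaN T N + K))"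

lemma sigma_eq: "sigmaN TYPE('d::finite) N = (\<Sum>n\<in>(freq_ball N :: (int^'d) set). (acoef n)\<^sup>2)"
  unfolding sigmaN_def by (simp add: acoef_sq)

lemma freq_norm_zero: "freq_norm (0::int^'d::finite) = 0"
proof -
  have "(\<chi> i. real_of_int ((0::int^'d) $ i)) = (0::real^'d)" by (simp add: vec_eq_iff)
  then show ?thesis unfolding freq_norm_def by simp
qed

lemma zero_in_ball: "(0::int^'d::finite) \<in> freq_ball N"
  by (simp add: freq_ball_def freq_norm_zero)

lemma acoef_zero: "acoef (0::int^'d::finite) = 1"
  unfolding acoef_def japanese_def freq_norm_zero by simp

lemma sigma_ge1: "sigmaN TYPE('d::finite) N \<ge> 1"
proof -
  have "(acoef (0::int^'d))\<^sup>2 \<le> (\<Sum>n\<in>(freq_ball N :: (int^'d) set). (acoef n)\<^sup>2)"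
    by (rule member_le_sum) (simp_all add: zero_in_ball finite_freq_ball)
  then show ?thesis unfolding sigma_eq acoef_zero by simp
qed

lemma McN_ge1: "McN TYPE('d::finite) N \<ge> 1"
proof -
  have "card (freq_ball N :: (int^'d) set) \<noteq> 0"
    using zero_in_ball finite_freq_ball by (metis card_0_eq empty_iff)
  then show ?thesis unfolding McN_def by simp
qed

lemma japanese_le_2N: "n \<in> freq_ball N \<Longrightarrow> N \<ge> 1 \<Longrightarrow> japanese n \<le> 2 * real N"
  using japanese_le[of n] by (simp add: freq_ball_def)

lemma fixed_N_bound:
  assumes N: "N \<ge> 1" and s: "s > 0" and K: "K > 0"
  shows "(\<integral>\<^sup>+ \<xi>. indicator {\<xi>. \<bar>torus_integral (wick2 TYPE('d::finite) N \<xi>)\<bar> \<le> K} \<xi>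
                   * ennreal (exp (RN s TYPE('d) N \<xi>)) \<partial>(gauss_space :: (int ^ 'd \<Rightarrow> real) measure))
         \<ge> ennreal (exp (ExN s K TYPE('d) N))"
proof -
  define B where "B = (freq_ball N :: (int^'d) set)"
  define M where "M = McN TYPE('d) N"
  define \<sigma> where "\<sigma> = sigmaN TYPE('d) N"
  define \<eta> where "\<eta> = etaN TYPE('d) N K"
  define c0 where "c0 = sqrt (\<sigma> / M)"
  define bb where "bb n = c0 / acoef n" for n :: "int^'d"
  define E where "E = {\<xi>::int^'d \<Rightarrow> real. \<forall>n\<in>B. bb n \<le> \<xi> n \<and> \<xi> n \<le> bb n + \<eta>}"
  define Lg where "Lg = s / 4 * (volN TYPE('d) N * (M\<^sup>2 * \<sigma>\<^sup>2 / 16) - 6 * \<sigma> * (\<sigma> + K))"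
  define Lp where "Lp = M * ln \<eta> - \<sigma> * (2 * real N) ^ CARD('d) - 3 * M"
  have finB: "finite B" unfolding B_def by (rule finite_freq_ball)
  have M1: "M \<ge> 1" unfolding M_def by (rule McN_ge1)
  have MB: "real (card B) = M" unfolding M_def McN_def B_def ..
  have s1: "\<sigma> \<ge> 1" unfolding \<sigma>_def by (rule sigma_ge1)
  have sig: "\<sigma> = (\<Sum>n\<in>B. (acoef n)\<^sup>2)" unfolding \<sigma>_def B_def by (rule sigma_eq)
  have c0: "c0 \<ge> 0" "real (card B) * c0\<^sup>2 = \<sigma>"
    using M1 s1 by (auto simp: c0_def MB)
  have eta: "0 < \<eta>" "\<eta> \<le> 1" "3 * \<eta> * \<sigma> \<le> K"
    using K s1 by (auto simp: \<eta>_def etaN_def \<sigma>_def[symmetric] min_def field_simps)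
  have bb0: "bb n \<ge> 0" for n unfolding bb_def using c0 acoef_pos[of n] by simp
  have Esets: "E \<in> sets (gauss_space :: (int ^ 'd \<Rightarrow> real) measure)"
    unfolding E_def by (rule gauss_event(1)[OF finB])
  have onE: "\<bar>torus_integral (wick2 TYPE('d) N \<xi>)\<bar> \<le> K \<and> RN s TYPE('d) N \<xi> \<ge> Lg" if xi: "\<xi> \<in> E" for \<xi>
  proof -
    have ev: "\<And>n. n \<in> B \<Longrightarrow> c0 / acoef n \<le> \<xi> n \<and> \<xi> n \<le> c0 / acoef n + \<eta>"
      using xi by (auto simp: E_def bb_def)
    note PB = P_bounds[OF finB acoef_pos c0 sig eta ev]
    let ?P = "\<Sum>n\<in>B. (acoef n * \<xi> n)\<^sup>2"
    have w2: "torus_integral (wick2 TYPE('d) N \<xi>) = ?P - \<sigma>"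
      unfolding torus_wick2 B_def \<sigma>_def ..
    have part1: "\<bar>torus_integral (wick2 TYPE('d) N \<xi>)\<bar> \<le> K"
      unfolding w2 using PB(1,2) by linarith
    have nn: "\<And>n. n \<in> freq_ball N \<Longrightarrow> \<xi> n \<ge> 0"
      using ev bb0 unfolding B_def bb_def by (meson order_trans)
    let ?S = "\<Sum>n\<in>B. acoef n * \<xi> n"
    have S: "?S \<ge> M * c0"
    proof -
      have "M * c0 = (\<Sum>n\<in>B. c0)" using MB by simp
      also have "\<dots> \<le> ?S" using PB(3) by (rule sum_mono)
      finally show ?thesis .
    qed
    have IT4: "IT (\<lambda>x::real^'d. (uN N \<xi> x) ^ 4) \<ge> measure lborel (SC N :: (real^'d) set) * (?S / 2) ^ 4"
      using IT_uN4_lower[OF N nn] unfolding B_def .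
    have "(M * c0 / 2) ^ 4 \<le> (?S / 2) ^ 4"
      using S c0 M1 by (intro power_mono) auto
    moreover have "(M * c0 / 2) ^ 4 = M\<^sup>2 * \<sigma>\<^sup>2 / 16"
    proof -
      have "(M * c0 / 2) ^ 4 = (M * (M * c0\<^sup>2))\<^sup>2 / 16" by (simp add: power2_eq_square power4_eq_xxxx)
      also have "\<dots> = M\<^sup>2 * \<sigma>\<^sup>2 / 16" using c0(2) MB by (simp add: power_mult_distrib)
      finally show ?thesis .
    qed
    ultimately have S4: "M\<^sup>2 * \<sigma>\<^sup>2 / 16 \<le> (?S / 2) ^ 4" by simp
    have ms: "measure lborel (SC N :: (real^'d) set) / (2 * pi) ^ CARD('d) = volN TYPE('d) N"
      unfolding volN_def measure_SC[OF N] ..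
    have vpos: "volN TYPE('d) N \<ge> 0" unfolding volN_def by simp
    have "volN TYPE('d) N * (M\<^sup>2 * \<sigma>\<^sup>2 / 16) \<le> volN TYPE('d) N * (?S / 2) ^ 4"
      using S4 vpos by (rule mult_left_mono)
    also have "\<dots> = measure lborel (SC N :: (real^'d) set) * (?S / 2) ^ 4 / (2 * pi) ^ CARD('d)"
      unfolding ms[symmetric] by simp
    also have "\<dots> \<le> IT (\<lambda>x::real^'d. (uN N \<xi> x) ^ 4) / (2 * pi) ^ CARD('d)"
      using IT4 by (intro divide_right_mono) auto
    finally have g1: "volN TYPE('d) N * (M\<^sup>2 * \<sigma>\<^sup>2 / 16) \<le> IT (\<lambda>x::real^'d. (uN N \<xi> x) ^ 4) / (2 * pi) ^ CARD('d)" .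
    have w4: "torus_integral (wick4 TYPE('d) N \<xi>) = IT (\<lambda>x::real^'d. (uN N \<xi> x) ^ 4) / (2 * pi) ^ CARD('d) - 6 * \<sigma> * ?P + 3 * \<sigma>\<^sup>2"
      unfolding torus_wick4 B_def \<sigma>_def ..
    have "6 * \<sigma> * ?P \<le> 6 * \<sigma> * (\<sigma> + K)" using PB(2) s1 by (intro mult_left_mono) auto
    then have "torus_integral (wick4 TYPE('d) N \<xi>) \<ge> volN TYPE('d) N * (M\<^sup>2 * \<sigma>\<^sup>2 / 16) - 6 * \<sigma> * (\<sigma> + K)"
    proof -
      have "3 * \<sigma>\<^sup>2 \<ge> 0" by simp
      then show ?thesis unfolding w4 using g1 \<open>6 * \<sigma> * ?P \<le> 6 * \<sigma> * (\<sigma> + K)\<close> by linarith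
    qed
    then have "RN s TYPE('d) N \<xi> \<ge> Lg"
      unfolding RN_def Lg_def using s by (intro mult_left_mono) auto
    with part1 show ?thesis by simp
  qed
  have prob: "emeasure (gauss_space :: (int ^ 'd \<Rightarrow> real) measure) E \<ge> ennreal (exp Lp)"
  proof -
    have "emeasure (gauss_space :: (int ^ 'd \<Rightarrow> real) measure) E = (\<Prod>n\<in>B. emeasure GD {bb n..bb n + \<eta>})"
      unfolding E_def by (rule gauss_event(2)[OF finB])
    also have "\<dots> \<ge> (\<Prod>n\<in>B. ennreal (\<eta> * exp (- (bb n)\<^sup>2 - 3)))"
      by (intro prod_mono_ennreal GD_interval_lower bb0 eta(1,2))
    moreover have "(\<Prod>n\<in>B. ennreal (\<eta> * exp (- (bb n)\<^sup>2 - 3))) = ennreal (\<Prod>n\<in>B. \<eta> * exp (- (bb n)\<^sup>2 - 3))"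
      using eta by (intro prod_ennreal) simp
    moreover have "(\<Prod>n\<in>B. \<eta> * exp (- (bb n)\<^sup>2 - 3)) = exp (M * ln \<eta> - (\<Sum>n\<in>B. (bb n)\<^sup>2) - 3 * M)"
    proof -
      have "(\<Prod>n\<in>B. \<eta> * exp (- (bb n)\<^sup>2 - 3)) = \<eta> ^ card B * exp (\<Sum>n\<in>B. - (bb n)\<^sup>2 - 3)"
        by (simp add: prod.distrib exp_sum finB)
      also have "\<eta> ^ card B = exp (M * ln \<eta>)"
        using eta MB by (metis exp_ln exp_of_nat_mult)
      also have "(\<Sum>n\<in>B. - (bb n)\<^sup>2 - 3) = - (\<Sum>n\<in>B. (bb n)\<^sup>2) - 3 * M"
        using MB by (simp add: sum_subtractf sum_negf)
      finally show ?thesis by (simp flip: exp_add)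
    qed
    moreover have "(\<Sum>n\<in>B. (bb n)\<^sup>2) \<le> \<sigma> * (2 * real N) ^ CARD('d)"
    proof -
      have "(bb n)\<^sup>2 \<le> c0\<^sup>2 * (2 * real N) ^ CARD('d)" if n: "n \<in> B" for n
      proof -
        have "(bb n)\<^sup>2 = c0\<^sup>2 / (acoef n)\<^sup>2" unfolding bb_def by (simp add: power_divide)
        also have "\<dots> = c0\<^sup>2 * japanese n powr real CARD('d)"
          unfolding acoef_sq using japanese_pos[of n] by (simp add: powr_minus divide_inverse)
        also have "\<dots> \<le> c0\<^sup>2 * (2 * real N) powr real CARD('d)"
          using japanese_le_2N[of n N] n N japanese_pos[of n] unfolding B_def
          by (intro mult_left_mono powr_mono2) auto
        also have "\<dots> = c0\<^sup>2 * (2 * real N) ^ CARD('d)"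
          using N by (simp add: powr_realpow)
        finally show ?thesis .
      qed
      then have "(\<Sum>n\<in>B. (bb n)\<^sup>2) \<le> (\<Sum>n\<in>B. c0\<^sup>2 * (2 * real N) ^ CARD('d))" by (rule sum_mono)
      also have "\<dots> = \<sigma> * (2 * real N) ^ CARD('d)" using c0(2) by simp
      finally show ?thesis .
    qed
    ultimately show ?thesis unfolding Lp_def
      by (smt (verit, ccfv_SIG) ennreal_leI exp_le_cancel_iff order_trans)
  qed
  have "ennreal (exp (ExN s K TYPE('d) N)) = ennreal (exp Lg) * ennreal (exp Lp)"
    unfolding ExN_def Lg_def Lp_def M_def \<sigma>_def \<eta>_def
    by (simp add: ennreal_mult[symmetric] exp_add[symmetric] algebra_simps)
  also have "\<dots> \<le> ennreal (exp Lg) * emeasure (gauss_space :: (int ^ 'd \<Rightarrow> real) measure) E"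
    using prob by (rule mult_left_mono) simp
  also have "\<dots> = (\<integral>\<^sup>+ \<xi>\<in>E. ennreal (exp Lg) \<partial>(gauss_space :: (int ^ 'd \<Rightarrow> real) measure))"
    by (rule nn_integral_cmult_indicator[symmetric, OF Esets])
  also have "\<dots> \<le> (\<integral>\<^sup>+ \<xi>. indicator {\<xi>. \<bar>torus_integral (wick2 TYPE('d::finite) N \<xi>)\<bar> \<le> K} \<xi>
                   * ennreal (exp (RN s TYPE('d) N \<xi>)) \<partial>(gauss_space :: (int ^ 'd \<Rightarrow> real) measure))"
  proof (rule nn_integral_mono)
    fix \<xi> :: "int^'d \<Rightarrow> real"
    show "ennreal (exp Lg) * indicator E \<xi> \<le> indicator {\<xi>. \<bar>torus_integral (wick2 TYPE('d::finite) N \<xi>)\<bar> \<le> K} \<xi>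
                   * ennreal (exp (RN s TYPE('d) N \<xi>))"
    proof (cases "\<xi> \<in> E")
      case True
      then show ?thesis using onE[OF True] by (simp add: ennreal_leI)
    next
      case False
      then show ?thesis by simp
    qed
  qed
  finally show ?thesis .
qed


lemma McN_upper: "N \<ge> 1 \<Longrightarrow> McN TYPE('d::finite) N \<le> (3 * real N) ^ CARD('d)"
proof -
  assume N: "N \<ge> 1"
  have "card (freq_ball N :: (int^'d) set) \<le> card (cube N :: (int^'d) set)"
    by (rule card_mono[OF finite_cube freq_ball_sub_cube])
  also have "\<dots> = (2 * N + 1) ^ CARD('d)" by (rule card_cube)
  finally have "McN TYPE('d) N \<le> real ((2 * N + 1) ^ CARD('d))" unfolding McN_def by linarith
  also have "\<dots> = (2 * real N + 1) ^ CARD('d)" by (simp add: add.commute)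
  also have "\<dots> \<le> (3 * real N) ^ CARD('d)" using N by (intro power_mono) auto
  finally show ?thesis .
qed

lemma McN_lower: "McN TYPE('d::finite) N \<ge> (real N / real CARD('d)) ^ CARD('d)"
proof -
  let ?d = "CARD('d)"
  let ?m = "N div ?d"
  have dpos: "?d > 0" by simp
  have e: "N = ?d * ?m + N mod ?d" by simp
  have "N mod ?d < ?d" using dpos by simp
  then have "N \<le> ?d * ?m + ?d" using e by linarith
  moreover have "?d * (2 * ?m + 1) = 2 * (?d * ?m) + ?d" by (simp add: algebra_simps)
  ultimately have "N \<le> ?d * (2 * ?m + 1)" by linarith
  then have "real N \<le> real ?d * real (2 * ?m + 1)" by (metis of_nat_le_iff of_nat_mult)
  then have h: "real N / real ?d \<le> real (2 * ?m + 1)" using dpos by (simp add: field_simps)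
  have "(real N / real ?d) ^ ?d \<le> real (2 * ?m + 1) ^ ?d" by (rule power_mono[OF h]) simp
  also have "\<dots> = real (card (cube ?m :: (int^'d) set))" by (simp add: card_cube)
  also have "\<dots> \<le> McN TYPE('d) N"
    unfolding McN_def by (simp add: card_mono[OF finite_freq_ball cube_sub_freq_ball])
  finally show ?thesis .
qed

definition Tc :: "'d::finite itself \<Rightarrow> nat \<Rightarrow> real" where
  "Tc T m = (\<Sum>n\<in>(cube m :: (int^'d) set). (acoef n)\<^sup>2)"

lemma cube_mono: "m \<le> m' \<Longrightarrow> cube m \<subseteq> cube m'"
proof
  fix x :: "int^'d" assume mm: "m \<le> m'" and "x \<in> cube m"
  then have h: "\<bar>x $ i\<bar> \<le> int m" for i by (simp add: cube_def)
  have "\<bar>x $ i\<bar> \<le> int m'" for i using h[of i] mm by linarith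
  then show "x \<in> cube m'" by (simp add: cube_def)
qed

lemma japanese_cube: "n \<in> cube m \<Longrightarrow> japanese (n::int^'d::finite) \<le> 1 + real CARD('d) * real m"
proof -
  assume n: "n \<in> cube m"
  then have h: "\<bar>n $ i\<bar> \<le> int m" for i unfolding cube_def by simp
  have "\<bar>real_of_int (n $ i)\<bar> \<le> real m" for i using h[of i] by linarith
  then have "(\<Sum>i\<in>UNIV. \<bar>real_of_int (n $ i)\<bar>) \<le> (\<Sum>i\<in>(UNIV::'d set). real m)"
    by (intro sum_mono) auto
  then have "freq_norm n \<le> real CARD('d) * real m" using freq_norm_le_l1[of n] by simp
  then show ?thesis using japanese_le[of n] by linarith
qed

lemma Tc_step:
  assumes m: "m \<ge> 1"
  shows "Tc TYPE('d::finite) (2 * m) \<ge> Tc TYPE('d) m + (4 / (3 * real CARD('d))) ^ CARD('d) / 4"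
proof -
  let ?d = "CARD('d)"
  let ?D = "(cube (2 * m) :: (int^'d) set) - cube m"
  have sub: "(cube m :: (int^'d) set) \<subseteq> cube (2 * m)" by (rule cube_mono) simp
  have split: "Tc TYPE('d) (2 * m) = Tc TYPE('d) m + (\<Sum>n\<in>?D. (acoef n)\<^sup>2)"
    unfolding Tc_def using sum.subset_diff[OF sub finite_cube] by (simp add: add.commute)
  have cardD: "real (card ?D) = (4 * real m + 1) ^ ?d - (2 * real m + 1) ^ ?d"
  proof -
    have "card ?D = card (cube (2 * m) :: (int^'d) set) - card (cube m :: (int^'d) set)"
      by (rule card_Diff_subset[OF finite_subset[OF sub finite_cube] sub])
    moreover have "card (cube m :: (int^'d) set) \<le> card (cube (2 * m) :: (int^'d) set)"
      by (rule card_mono[OF finite_cube sub])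
    ultimately show ?thesis by (simp add: card_cube of_nat_diff add.commute)
  qed
  have lowterm: "(acoef n)\<^sup>2 \<ge> 1 / (3 * real ?d * real m) ^ ?d" if n: "n \<in> ?D" for n
  proof -
    have "japanese n \<le> 1 + real ?d * real (2 * m)" using n japanese_cube[of n "2 * m"] by simp
    also have "\<dots> \<le> 3 * real ?d * real m"
    proof -
      have d1: "real ?d \<ge> 1" by (simp add: Suc_le_eq)
      have m1: "real m \<ge> 1" using m by simp
      have "1 \<le> real ?d * real m" using mult_mono[OF d1 m1] by simp
      then show ?thesis by (simp add: mult.commute)
    qed
    finally have j: "japanese n \<le> 3 * real ?d * real m" .
    have "1 / (3 * real ?d * real m) ^ ?d = (3 * real ?d * real m) powr (- real ?d)"
      using m by (simp add: powr_minus powr_realpow divide_inverse)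
    also have "\<dots> \<le> japanese n powr (- real ?d)"
      using j japanese_pos[of n] by (intro powr_mono2') auto
    finally show ?thesis by (simp add: acoef_sq)
  qed
  have "real (card ?D) * (1 / (3 * real ?d * real m) ^ ?d) \<le> (\<Sum>n\<in>?D. (acoef n)\<^sup>2)"
    using sum_bounded_below[of ?D "1 / (3 * real ?d * real m) ^ ?d" "\<lambda>n. (acoef n)\<^sup>2"] lowterm by simp
  moreover have "(4 / (3 * real ?d)) ^ ?d / 4 \<le> real (card ?D) * (1 / (3 * real ?d * real m) ^ ?d)"
  proof -
    let ?a = "4 * real m + 1" and ?b = "2 * real m + 1"
    have ab: "?b \<le> 3/4 * ?a" using m by simp
    have "?b ^ ?d \<le> (3/4 * ?a) ^ ?d" using ab by (intro power_mono) auto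
    also have "\<dots> = (3/4) ^ ?d * ?a ^ ?d" by (rule power_mult_distrib)
    also have "\<dots> \<le> (3/4) * ?a ^ ?d"
    proof -
      have "(3/4::real) ^ ?d \<le> (3/4) ^ 1" by (rule power_decreasing) (simp_all add: Suc_le_eq)
      then show ?thesis by (intro mult_right_mono) auto
    qed
    finally have "?a ^ ?d / 4 \<le> real (card ?D)" unfolding cardD by simp
    moreover have "(4 * real m) ^ ?d \<le> ?a ^ ?d" by (intro power_mono) auto
    ultimately have c: "(4 * real m) ^ ?d / 4 \<le> real (card ?D)" by linarith
    have pos: "(3 * real ?d * real m) ^ ?d > 0" using m by simp
    have "(4 / (3 * real ?d)) ^ ?d / 4 = (4 * real m) ^ ?d / 4 * (1 / (3 * real ?d * real m) ^ ?d)"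
      using m by (simp add: power_divide power_mult_distrib field_simps)
    also have "\<dots> \<le> real (card ?D) * (1 / (3 * real ?d * real m) ^ ?d)"
      using c pos by (intro mult_right_mono) auto
    finally show ?thesis .
  qed
  ultimately show ?thesis unfolding split by linarith
qed

lemma Tc_nonneg: "Tc T m \<ge> 0"
  unfolding Tc_def by (intro sum_nonneg) simp

lemma Tc_pow2: "Tc TYPE('d::finite) (2 ^ j) \<ge> real j * ((4 / (3 * real CARD('d))) ^ CARD('d) / 4)"
proof (induction j)
  case 0 then show ?case using Tc_nonneg by simp
next
  case (Suc j)
  have "Tc TYPE('d) (2 ^ Suc j) = Tc TYPE('d) (2 * 2 ^ j)" by simp
  also have "\<dots> \<ge> Tc TYPE('d) (2 ^ j) + (4 / (3 * real CARD('d))) ^ CARD('d) / 4"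
    by (rule Tc_step) simp
  finally show ?case using Suc.IH by (simp add: algebra_simps)
qed

lemma sigma_ge_Tc: "CARD('d::finite) * m \<le> N \<Longrightarrow> sigmaN TYPE('d) N \<ge> Tc TYPE('d) m"
  unfolding sigma_eq Tc_def
  by (intro sum_mono2 finite_freq_ball cube_sub_freq_ball) auto

lemma sigma_unbounded: "\<exists>N1. \<forall>N\<ge>N1. sigmaN TYPE('d::finite) N \<ge> S"
proof -
  define \<beta> where "\<beta> = (4 / (3 * real CARD('d))) ^ CARD('d) / 4"
  have bpos: "\<beta> > 0" unfolding \<beta>_def by simp
  obtain j :: nat where j: "real j \<ge> S / \<beta>" using real_arch_simple by blast
  have "S \<le> real j * \<beta>" using j bpos by (simp add: field_simps)
  then have "\<forall>N\<ge>CARD('d) * 2 ^ j. sigmaN TYPE('d) N \<ge> S"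
    using Tc_pow2[of j] sigma_ge_Tc[of "2 ^ j"] unfolding \<beta>_def by (meson order_trans)
  then show ?thesis by blast
qed


lemma final_arith:
  fixes M X \<sigma> lnE V s K \<gamma> P2 P3 :: real
  assumes s: "s > 0" and K: "K > 0" and sig: "\<sigma> \<ge> 1" and X: "X \<ge> 0"
    and M: "0 \<le> M" "M \<le> P3 * X" and P: "P2 \<ge> 0" "P3 \<ge> 0"
    and vM: "V * M\<^sup>2 \<ge> \<gamma> * X" and g: "\<gamma> > 0"
    and lnE: "lnE \<ge> - 3 * \<sigma> / K" "lnE \<le> 0"
    and sig0: "\<sigma> \<ge> ((3 * P3 / K + P2) + 3 * P3 + 1) / (s * \<gamma> / 128)"
    and X0: "X \<ge> (3 * s / 2) * (1 + K) / (s * \<gamma> / 128)"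
  shows "M * lnE - \<sigma> * (P2 * X) - 3 * M + s / 4 * (V * (M\<^sup>2 * \<sigma>\<^sup>2 / 16) - 6 * \<sigma> * (\<sigma> + K)) \<ge> X"
proof -
  define Q where "Q = s * \<gamma> / 128"
  have Q: "Q > 0" unfolding Q_def using s g by simp
  define T1 where "T1 = (3 * P3 / K) * (X * \<sigma>)"
  define T2 where "T2 = P2 * (X * \<sigma>)"
  define T3 where "T3 = P3 * X"
  define U where "U = Q * (X * \<sigma>\<^sup>2)"
  define W where "W = (3 * s / 2) * (1 + K) * \<sigma>\<^sup>2"
  have f1: "M * lnE \<ge> - T1"
  proof -
    have "(P3 * X) * lnE \<le> M * lnE" using M(2) lnE(2) by (rule mult_right_mono_neg)
    moreover have "(P3 * X) * (- 3 * \<sigma> / K) \<le> (P3 * X) * lnE"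
      using lnE(1) P X by (intro mult_left_mono) auto
    moreover have "(P3 * X) * (- 3 * \<sigma> / K) = - T1" unfolding T1_def by (simp add: field_simps)
    ultimately show ?thesis by linarith
  qed
  have f2: "\<sigma> * (P2 * X) = T2" unfolding T2_def by (simp add: algebra_simps)
  have f3: "3 * M \<le> 3 * T3" unfolding T3_def using M by simp
  have f4: "s / 4 * (V * (M\<^sup>2 * \<sigma>\<^sup>2 / 16)) \<ge> 2 * U"
  proof -
    have "(\<gamma> * X) * \<sigma>\<^sup>2 \<le> (V * M\<^sup>2) * \<sigma>\<^sup>2" using vM by (rule mult_right_mono) simp
    then have "s / 64 * ((\<gamma> * X) * \<sigma>\<^sup>2) \<le> s / 64 * ((V * M\<^sup>2) * \<sigma>\<^sup>2)" using s by (intro mult_left_mono) auto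
    moreover have "s / 64 * ((\<gamma> * X) * \<sigma>\<^sup>2) = 2 * U" unfolding U_def Q_def by (simp add: algebra_simps)
    moreover have "s / 64 * ((V * M\<^sup>2) * \<sigma>\<^sup>2) = s / 4 * (V * (M\<^sup>2 * \<sigma>\<^sup>2 / 16))" by (simp add: algebra_simps)
    ultimately show ?thesis by linarith
  qed
  have f5: "s / 4 * (6 * \<sigma> * (\<sigma> + K)) \<le> W"
  proof -
    have "\<sigma> \<le> \<sigma>\<^sup>2" using sig by (simp add: power2_eq_square)
    then have "K * \<sigma> \<le> K * \<sigma>\<^sup>2" using K by (intro mult_left_mono) auto
    then have "\<sigma>\<^sup>2 + K * \<sigma> \<le> (1 + K) * \<sigma>\<^sup>2" by (simp add: algebra_simps)
    then have "(3 * s / 2) * (\<sigma>\<^sup>2 + K * \<sigma>) \<le> (3 * s / 2) * ((1 + K) * \<sigma>\<^sup>2)" using s by (intro mult_left_mono) auto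
    moreover have "s / 4 * (6 * \<sigma> * (\<sigma> + K)) = (3 * s / 2) * (\<sigma>\<^sup>2 + K * \<sigma>)" by (simp add: algebra_simps power2_eq_square)
    moreover have "(3 * s / 2) * ((1 + K) * \<sigma>\<^sup>2) = W" unfolding W_def by (simp add: algebra_simps)
    ultimately show ?thesis by linarith
  qed
  have f6: "U - T1 - T2 - 3 * T3 \<ge> X"
  proof -
    let ?A = "3 * P3 / K + P2" and ?C = "3 * P3"
    have "\<sigma> * Q \<ge> ?A + ?C + 1" using sig0 Q unfolding Q_def[symmetric] by (simp add: field_simps)
    then have "\<sigma> * (\<sigma> * Q) \<ge> \<sigma> * (?A + ?C + 1)" using sig by (intro mult_left_mono) auto
    moreover have "\<sigma> * (?C + 1) \<ge> ?C + 1" using sig P by (simp add: mult_le_cancel_right1)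
    ultimately have "Q * \<sigma>\<^sup>2 \<ge> ?A * \<sigma> + ?C + 1" by (simp add: power2_eq_square algebra_simps)
    then have "X * (Q * \<sigma>\<^sup>2) \<ge> X * (?A * \<sigma> + ?C + 1)" using X by (rule mult_left_mono)
    moreover have "X * (Q * \<sigma>\<^sup>2) = U" unfolding U_def by (simp add: algebra_simps)
    moreover have "X * (?A * \<sigma> + ?C + 1) = T1 + T2 + 3 * T3 + X" unfolding T1_def T2_def T3_def by (simp add: algebra_simps)
    ultimately show ?thesis by linarith
  qed
  have f7: "U \<ge> W"
  proof -
    have "X * Q \<ge> (3 * s / 2) * (1 + K)" using X0 Q unfolding Q_def[symmetric] by (simp add: field_simps)
    then have "(3 * s / 2) * (1 + K) * \<sigma>\<^sup>2 \<le> (X * Q) * \<sigma>\<^sup>2" by (rule mult_right_mono) simp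
    then show ?thesis unfolding U_def W_def by (simp add: algebra_simps)
  qed
  have "s / 4 * (V * (M\<^sup>2 * \<sigma>\<^sup>2 / 16) - 6 * \<sigma> * (\<sigma> + K)) = s / 4 * (V * (M\<^sup>2 * \<sigma>\<^sup>2 / 16)) - s / 4 * (6 * \<sigma> * (\<sigma> + K))"
    by (rule right_diff_distrib)
  then show ?thesis using f1 f2 f3 f4 f5 f6 f7 by linarith
qed


lemma ln_eta_bounds:
  fixes K \<sigma> :: real
  assumes K: "K > 0" and s1: "\<sigma> \<ge> 1"
  shows "ln (min 1 (K / (3 * \<sigma>))) \<ge> - 3 * \<sigma> / K" and "ln (min 1 (K / (3 * \<sigma>))) \<le> 0"
proof -
  let ?e = "min 1 (K / (3 * \<sigma>))"
  have epos: "?e > 0" using K s1 by simp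
  show "ln ?e \<le> 0" using epos by simp
  show "ln ?e \<ge> - 3 * \<sigma> / K"
  proof (cases "K / (3 * \<sigma>) \<le> 1")
    case True
    then have e: "?e = K / (3 * \<sigma>)" by simp
    have "ln (1 / ?e) \<le> 1 / ?e - 1" using epos by (intro ln_le_minus_one) simp
    moreover have "ln (1 / ?e) = - ln ?e" using epos by (simp add: ln_div)
    moreover have "1 / ?e = 3 * \<sigma> / K" unfolding e by simp
    ultimately show ?thesis by (simp add: field_simps)
  next
    case False
    then have "?e = 1" by simp
    then show ?thesis using K s1 by simp
  qed
qed

lemma vol_M_lower:
  assumes N: "N \<ge> 1"
  shows "volN TYPE('d::finite) N * (McN TYPE('d) N)\<^sup>2 \<ge> (1 / (8 * pi * real CARD('d) ^ 3)) ^ CARD('d) * real N ^ CARD('d)"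
proof -
  let ?d = "CARD('d)"
  have dpos: "real ?d > 0" by simp
  have Npos: "real N > 0" using N by simp
  have V0: "volN TYPE('d) N \<ge> 0" unfolding volN_def by simp
  have m0: "(real N / real ?d) ^ ?d \<ge> 0" by simp
  have "((real N / real ?d) ^ ?d)\<^sup>2 \<le> (McN TYPE('d) N)\<^sup>2"
    using McN_lower m0 by (intro power_mono) auto
  then have "volN TYPE('d) N * ((real N / real ?d) ^ ?d)\<^sup>2 \<le> volN TYPE('d) N * (McN TYPE('d) N)\<^sup>2"
    using V0 by (rule mult_left_mono)
  moreover have "volN TYPE('d) N * ((real N / real ?d) ^ ?d)\<^sup>2 = (1 / (8 * pi * real ?d ^ 3)) ^ ?d * real N ^ ?d"
  proof -
    have "volN TYPE('d) N * ((real N / real ?d) ^ ?d)\<^sup>2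
        = (1 / (4 * real ?d * real N) / (2 * pi) * (real N / real ?d)\<^sup>2) ^ ?d"
    proof -
      have e1: "((real N / real ?d) ^ ?d)\<^sup>2 = ((real N / real ?d)\<^sup>2) ^ ?d"
        by (simp flip: power_mult add: mult.commute)
      show ?thesis unfolding volN_def e1 by (simp only: power_divide power_mult_distrib)
    qed
    also have "1 / (4 * real ?d * real N) / (2 * pi) * (real N / real ?d)\<^sup>2 = 1 / (8 * pi * real ?d ^ 3) * real N"
      using dpos Npos by (simp add: field_simps power2_eq_square power3_eq_cube)
    finally show ?thesis by (simp only: power_mult_distrib)
  qed
  ultimately show ?thesis by simp
qed

lemma ExN_large:
  assumes s: "s > 0" and K: "K > 0" and N: "N \<ge> 1"
    and sig0: "sigmaN TYPE('d::finite) N \<ge> max 1 (((3 * 3 ^ CARD('d) / K + 2 ^ CARD('d)) + 3 * 3 ^ CARD('d) + 1)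
                    / (s * (1 / (8 * pi * real CARD('d) ^ 3)) ^ CARD('d) / 128))"
    and X0: "real N \<ge> (3 * s / 2) * (1 + K) / (s * (1 / (8 * pi * real CARD('d) ^ 3)) ^ CARD('d) / 128)"
  shows "ExN s K TYPE('d) N \<ge> real N"
proof -
  let ?d = "CARD('d)"
  let ?X = "real N ^ ?d"
  let ?\<gamma> = "(1 / (8 * pi * real ?d ^ 3)) ^ ?d"
  have XN: "real N \<le> ?X" using N by (simp add: self_le_power)
  have s1: "sigmaN TYPE('d) N \<ge> 1" by (rule sigma_ge1)
  have lnb: "ln (etaN TYPE('d) N K) \<ge> - 3 * sigmaN TYPE('d) N / K" "ln (etaN TYPE('d) N K) \<le> 0"
    unfolding etaN_def using ln_eta_bounds[OF K s1] by auto
  have Mup: "McN TYPE('d) N \<le> 3 ^ ?d * ?X" using McN_upper[OF N] by (simp add: power_mult_distrib)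
  have "McN TYPE('d) N \<ge> 1" by (rule McN_ge1)
  then have M0: "McN TYPE('d) N \<ge> 0" by simp
  have X0': "?X \<ge> 0" by simp
  have P2: "(2::real) ^ ?d \<ge> 0" and P3: "(3::real) ^ ?d \<ge> 0" by simp_all
  have g: "?\<gamma> > 0" by simp
  have sig0': "sigmaN TYPE('d) N \<ge> ((3 * 3 ^ ?d / K + 2 ^ ?d) + 3 * 3 ^ ?d + 1) / (s * ?\<gamma> / 128)"
    using sig0 by simp
  have X0'': "?X \<ge> (3 * s / 2) * (1 + K) / (s * ?\<gamma> / 128)"
    using X0 XN by linarith
  have FA: "McN TYPE('d) N * ln (etaN TYPE('d) N K) - sigmaN TYPE('d) N * (2 ^ ?d * ?X) - 3 * McN TYPE('d) N
     + s / 4 * (volN TYPE('d) N * ((McN TYPE('d) N)\<^sup>2 * (sigmaN TYPE('d) N)\<^sup>2 / 16) - 6 * sigmaN TYPE('d) N * (sigmaN TYPE('d) N + K)) \<ge> ?X"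
    by (rule final_arith[OF s K s1 X0' M0 Mup P2 P3 vol_M_lower[OF N] g lnb sig0' X0''])
  have "(2 * real N) ^ ?d = 2 ^ ?d * ?X" by (rule power_mult_distrib)
  then have "ExN s K TYPE('d) N \<ge> ?X" unfolding ExN_def using FA by simp
  then show ?thesis using XN by linarith
qed


theorem theorem1p3:
  fixes \<sigma> K :: real
  assumes "\<sigma> > 0" and "K > 0"
  shows "(SUP N. \<integral>\<^sup>+ \<xi>. ennreal (exp (RN \<sigma> TYPE('d) N \<xi>)) \<partial>(gauss_space :: (int ^ 'd \<Rightarrow> real) measure))
         \<ge> (SUP N. \<integral>\<^sup>+ \<xi>. indicator {\<xi>. torus_integral (wick2 TYPE('d) N \<xi>) \<le> K} \<xi>
                   * ennreal (exp (RN \<sigma> TYPE('d) N \<xi>)) \<partial>(gauss_space :: (int ^ 'd \<Rightarrow> real) measure))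
       \<and> (SUP N. \<integral>\<^sup>+ \<xi>. indicator {\<xi>. torus_integral (wick2 TYPE('d) N \<xi>) \<le> K} \<xi>
                   * ennreal (exp (RN \<sigma> TYPE('d) N \<xi>)) \<partial>(gauss_space :: (int ^ 'd \<Rightarrow> real) measure))
         \<ge> (SUP N. \<integral>\<^sup>+ \<xi>. indicator {\<xi>. \<bar>torus_integral (wick2 TYPE('d) N \<xi>)\<bar> \<le> K} \<xi>
                   * ennreal (exp (RN \<sigma> TYPE('d) N \<xi>)) \<partial>(gauss_space :: (int ^ 'd \<Rightarrow> real) measure))
       \<and> (SUP N. \<integral>\<^sup>+ \<xi>. indicator {\<xi>. \<bar>torus_integral (wick2 TYPE('d) N \<xi>)\<bar> \<le> K} \<xi>
                   * ennreal (exp (RN \<sigma> TYPE('d) N \<xi>)) \<partial>(gauss_space :: (int ^ 'd \<Rightarrow> real) measure)) = \<infinity>"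
proof -
  let ?G = "gauss_space :: (int ^ 'd \<Rightarrow> real) measure"
  let ?F0 = "\<lambda>N. \<integral>\<^sup>+ \<xi>. ennreal (exp (RN \<sigma> TYPE('d) N \<xi>)) \<partial>?G"
  let ?F1 = "\<lambda>N. \<integral>\<^sup>+ \<xi>. indicator {\<xi>. torus_integral (wick2 TYPE('d) N \<xi>) \<le> K} \<xi>
                   * ennreal (exp (RN \<sigma> TYPE('d) N \<xi>)) \<partial>?G"
  let ?F2 = "\<lambda>N. \<integral>\<^sup>+ \<xi>. indicator {\<xi>. \<bar>torus_integral (wick2 TYPE('d) N \<xi>)\<bar> \<le> K} \<xi>
                   * ennreal (exp (RN \<sigma> TYPE('d) N \<xi>)) \<partial>?G"
  have le1: "?F1 N \<le> ?F0 N" for N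
  proof (rule nn_integral_mono)
    fix \<xi> :: "int^'d \<Rightarrow> real"
    show "indicator {\<xi>. torus_integral (wick2 TYPE('d) N \<xi>) \<le> K} \<xi> * ennreal (exp (RN \<sigma> TYPE('d) N \<xi>))
        \<le> ennreal (exp (RN \<sigma> TYPE('d) N \<xi>))"
      by (cases "torus_integral (wick2 TYPE('d) N \<xi>) \<le> K") simp_all
  qed
  have le2: "?F2 N \<le> ?F1 N" for N
  proof (rule nn_integral_mono)
    fix \<xi> :: "int^'d \<Rightarrow> real"
    show "indicator {\<xi>. \<bar>torus_integral (wick2 TYPE('d) N \<xi>)\<bar> \<le> K} \<xi> * ennreal (exp (RN \<sigma> TYPE('d) N \<xi>))
        \<le> indicator {\<xi>. torus_integral (wick2 TYPE('d) N \<xi>) \<le> K} \<xi> * ennreal (exp (RN \<sigma> TYPE('d) N \<xi>))"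
      by (cases "\<bar>torus_integral (wick2 TYPE('d) N \<xi>)\<bar> \<le> K") auto
  qed
  have A: "(SUP N. ?F1 N) \<le> (SUP N. ?F0 N)"
    by (rule SUP_mono) (use le1 in blast)
  have B: "(SUP N. ?F2 N) \<le> (SUP N. ?F1 N)"
    by (rule SUP_mono) (use le2 in blast)
  have C: "(SUP N. ?F2 N) = \<top>"
    unfolding SUP_eq_top_iff
  proof (intro allI impI)
    fix x :: ennreal assume "x < \<top>"
    then obtain r where r: "r \<ge> 0" "x = ennreal r" by (auto simp: less_top_ennreal)
    define \<gamma> where "\<gamma> = (1 / (8 * pi * real CARD('d) ^ 3)) ^ CARD('d)"
    define S0 where "S0 = max 1 (((3 * 3 ^ CARD('d) / K + 2 ^ CARD('d)) + 3 * 3 ^ CARD('d) + 1) / (\<sigma> * \<gamma> / 128))"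
    define X0 where "X0 = (3 * \<sigma> / 2) * (1 + K) / (\<sigma> * \<gamma> / 128)"
    obtain N1 where N1: "\<forall>N\<ge>N1. sigmaN TYPE('d) N \<ge> S0" using sigma_unbounded by blast
    define N where "N = max (max 1 N1) (nat \<lceil>max X0 r\<rceil> + 1)"
    have N_1: "N \<ge> 1" unfolding N_def by simp
    have N_N1: "N \<ge> N1" unfolding N_def by simp
    have N_big: "real N \<ge> max X0 r + 1"
    proof -
      have "real (nat \<lceil>max X0 r\<rceil> + 1) \<ge> max X0 r + 1" by linarith
      moreover have "real (nat \<lceil>max X0 r\<rceil> + 1) \<le> real N" unfolding N_def by simp
      ultimately show ?thesis by linarith
    qed
    have sigN: "sigmaN TYPE('d) N \<ge> S0" using N1 N_N1 by blast
    have Ex: "ExN \<sigma> K TYPE('d) N \<ge> real N"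
      by (rule ExN_large[OF assms N_1]) (use sigN N_big in \<open>simp_all add: S0_def X0_def \<gamma>_def\<close>)
    have "r < exp (ExN \<sigma> K TYPE('d) N)"
    proof -
      have "r < real N" using N_big by simp
      also have "\<dots> \<le> ExN \<sigma> K TYPE('d) N" by (rule Ex)
      also have "\<dots> < exp (ExN \<sigma> K TYPE('d) N)"
        using exp_ge_add_one_self[of "ExN \<sigma> K TYPE('d) N"] by linarith
      finally show ?thesis .
    qed
    then have "x < ennreal (exp (ExN \<sigma> K TYPE('d) N))" using r by (simp add: ennreal_less_iff)
    also have "\<dots> \<le> ?F2 N" by (rule fixed_N_bound[OF N_1 assms])
    finally show "\<exists>i\<in>UNIV. x < ?F2 i" by blast
  qed
  have C': "(SUP N. ?F2 N) = \<infinity>" using C by simp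
  show ?thesis using A B C' by blast
qed

end
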